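(* Let $p_1,\dots,p_9$ be general points in $\mathbb{P}^5$ and let $C$ be the (unique) elliptic normal sextic curve in $\mathbb{P}^5$ passing through these points. Then every cubic hypersurface in $\mathbb{P}^5$ that is singular at $p_1,\dots,p_9$ contains the secant variety $\sigma_2(C)$ and is singular along $C$.
   Context: An elliptic normal sextic curve in $\mathbb{P}^5$ is a smooth genus one curve embedded by a complete linear system of degree $6$; through $9$ general points of $\mathbb{P}^5$ there is exactly one such curve. $\sigma_2(C)$ denotes the variety of secant lines of $C$, i.e. the Zariski closure of the union of all lines joining two points of $C$. A hypersurface is singular at a point if its equation and all first partial derivatives vanish there. *)

theory Defs
  imports "HOL-Analysis.Analysis"
begin

text \<open>Points of projective 5-space are represented by nonzero homogeneous coordinate
vectors in complex^6; subvarieties by the cones of their coordinate vectors (without 0).\<close>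

definition hom_poly :: "nat \<Rightarrow> (complex^6 \<Rightarrow> complex) \<Rightarrow> bool" where
  "hom_poly d F \<longleftrightarrow> (\<exists>c :: (6 \<Rightarrow> nat) \<Rightarrow> complex.
     F = (\<lambda>x. \<Sum>\<alpha>\<in>{\<alpha>. sum \<alpha> UNIV = d}. c \<alpha> * (\<Prod>i\<in>UNIV. (x$i) ^ (\<alpha> i))))"

definition polyfun :: "((('i::finite) \<Rightarrow> complex) \<Rightarrow> complex) \<Rightarrow> bool" where
  "polyfun G \<longleftrightarrow> (\<exists>(A :: ('i \<Rightarrow> nat) set) c. finite A \<and>
     G = (\<lambda>z. \<Sum>\<alpha>\<in>A. c \<alpha> * (\<Prod>i\<in>UNIV. (z i) ^ (\<alpha> i))))"

definition partial :: "(complex^6 \<Rightarrow> complex) \<Rightarrow> 6 \<Rightarrow> complex^6 \<Rightarrow> complex" where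
  "partial F i x = deriv (\<lambda>t. F (\<chi> j. if j = i then x$j + t else x$j)) 0"

definition singular_at :: "(complex^6 \<Rightarrow> complex) \<Rightarrow> complex^6 \<Rightarrow> bool" where
  "singular_at F x \<longleftrightarrow> F x = 0 \<and> (\<forall>i. partial F i x = 0)"

definition zariski_closure :: "(complex^6) set \<Rightarrow> (complex^6) set" where
  "zariski_closure S = {x. x \<noteq> 0 \<and>
     (\<forall>d F. hom_poly d F \<and> (\<forall>y\<in>S. F y = 0) \<longrightarrow> F x = 0)}"

definition cone :: "(complex^6) set \<Rightarrow> (complex^6) set" where
  "cone S = {t *s v | t v. t \<noteq> 0 \<and> v \<in> S}"

text \<open>Elliptic normal sextic curves: images, under a projective linear transformation,
of a smooth plane cubic y^2 = x^3 + a x + b embedded by the complete linear system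
|6 O| with basis 1, x, y, x^2, x y, x^3 (the point O at infinity goes to [0:...:0:1]).
Over the complex numbers every smooth genus one curve embedded by a complete linear
system of degree 6 is of this form.\<close>
definition weierstrass_sextic :: "complex \<Rightarrow> complex \<Rightarrow> (complex^6) set" where
  "weierstrass_sextic a b =
     {vector [1, x, y, x^2, x*y, x^3] | x y. y^2 = x^3 + a*x + b} \<union> {vector [0,0,0,0,0,1]}"

definition ell_normal_sextic :: "(complex^6) set \<Rightarrow> bool" where
  "ell_normal_sextic C \<longleftrightarrow> (\<exists>a b (A :: complex^6^6).
     4*a^3 + 27*b^2 \<noteq> 0 \<and> invertible A \<and>
     C = cone ((\<lambda>v. A *v v) ` weierstrass_sextic a b))"

definition secant_variety :: "(complex^6) set \<Rightarrow> (complex^6) set" where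
  "secant_variety C = zariski_closure
     {s *s u + t *s v | s t u v. u \<in> C \<and> v \<in> C \<and> (\<forall>r. v \<noteq> r *s u) \<and>
        s *s u + t *s v \<noteq> 0}"

end

theory Submission
  imports Defs
begin

lemma vec6 [simp]:
  "(vector [a0,a1,a2,a3,a4,a5] :: 'a::zero^6) $ 1 = a0"
  "(vector [a0,a1,a2,a3,a4,a5] :: 'a::zero^6) $ 2 = a1"
  "(vector [a0,a1,a2,a3,a4,a5] :: 'a::zero^6) $ 3 = a2"
  "(vector [a0,a1,a2,a3,a4,a5] :: 'a::zero^6) $ 4 = a3"
  "(vector [a0,a1,a2,a3,a4,a5] :: 'a::zero^6) $ 5 = a4"
  "(vector [a0,a1,a2,a3,a4,a5] :: 'a::zero^6) $ 0 = a5"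
  by (simp_all add: vector_def)

definition Qc :: "complex \<Rightarrow> complex \<Rightarrow> complex \<Rightarrow> complex \<Rightarrow> complex^6 \<Rightarrow> complex" where
  "Qc c1 c2 a b u = (b*c1) * u$1 * u$1 * u$4 + (-1 * b*c2) * u$1 * u$1 * u$0 + (-1 * b*c1) * u$1 * u$2 * u$2 + (a*c1 + 2 * b*c2) * u$1 * u$2 * u$4 + (-1 * a*c2) * u$1 * u$2 * u$0 + (a*c2) * u$1 * u$4 * u$4 + (c1) * u$1 * u$4 * u$0 + (-1 * c1) * u$1 * u$5 * u$5 + (-1 * a*c1 + -1 * b*c2) * u$2 * u$2 * u$2 + (-1 * c1) * u$2 * u$2 * u$0 + (2 * c1) * u$2 * u$3 * u$5 + (-1 * c2) * u$2 * u$4 * u$0 + (c2) * u$2 * u$5 * u$5 + (-1 * c1) * u$3 * u$3 * u$4 + (c2) * u$3 * u$3 * u$0 + (-2 * c2) * u$3 * u$4 * u$5 + (c2) * u$4 * u$4 * u$4"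

definition DQ :: "complex \<Rightarrow> complex \<Rightarrow> complex \<Rightarrow> complex \<Rightarrow> complex^6 \<Rightarrow> complex^6 \<Rightarrow> complex" where
  "DQ c1 c2 a b u v = v$1 * ((2 * b*c1) * u$1 * u$4 + (-2 * b*c2) * u$1 * u$0 + (-1 * b*c1) * u$2 * u$2 + (a*c1 + 2 * b*c2) * u$2 * u$4 + (-1 * a*c2) * u$2 * u$0 + (a*c2) * u$4 * u$4 + (c1) * u$4 * u$0 + (-1 * c1) * u$5 * u$5) + v$2 * ((-2 * b*c1) * u$1 * u$2 + (a*c1 + 2 * b*c2) * u$1 * u$4 + (-1 * a*c2) * u$1 * u$0 + (-3 * a*c1 + -3 * b*c2) * u$2 * u$2 + (-2 * c1) * u$2 * u$0 + (2 * c1) * u$3 * u$5 + (-1 * c2) * u$4 * u$0 + (c2) * u$5 * u$5) + v$3 * ((2 * c1) * u$2 * u$5 + (-2 * c1) * u$3 * u$4 + (2 * c2) * u$3 * u$0 + (-2 * c2) * u$4 * u$5) + v$4 * ((b*c1) * u$1 * u$1 + (a*c1 + 2 * b*c2) * u$1 * u$2 + (2 * a*c2) * u$1 * u$4 + (c1) * u$1 * u$0 + (-1 * c2) * u$2 * u$0 + (-1 * c1) * u$3 * u$3 + (-2 * c2) * u$3 * u$5 + (3 * c2) * u$4 * u$4) + v$5 * ((-2 * c1) * u$1 * u$5 + (2 * c1) * u$2 * u$3 + (2 * c2) * u$2 * u$5 + (-2 * c2) * u$3 * u$4) + v$0 * ((-1 * b*c2) * u$1 * u$1 + (-1 * a*c2)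 * u$1 * u$2 + (c1) * u$1 * u$4 + (-1 * c1) * u$2 * u$2 + (-1 * c2) * u$2 * u$4 + (c2) * u$3 * u$3)"

lemma Qc_expand:
  "Qc c1 c2 a b (s *s u + t *s v) = s^3 * Qc c1 c2 a b u + s^2 * t * DQ c1 c2 a b u v
     + s * t^2 * DQ c1 c2 a b v u + t^3 * Qc c1 c2 a b v"
  unfolding Qc_def DQ_def by (simp add: algebra_simps power2_eq_square power3_eq_cube)

lemma DQ_scale: "DQ c1 c2 a b (s *s u) v = s^2 * DQ c1 c2 a b u v"
  unfolding DQ_def by (simp add: algebra_simps power2_eq_square)

lemma W_aff:
  assumes "y^2 = x^3 + a*x + b"
  shows "Qc c1 c2 a b (vector [1, x, y, x^2, x*y, x^3]) = 0"
    "DQ c1 c2 a b (vector [1, x, y, x^2, x*y, x^3]) v = 0"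
  using assms unfolding Qc_def DQ_def by (simp_all, algebra+)

lemma W_inf:
  shows "Qc c1 c2 a b (vector [0,0,0,0,0,1]) = 0"
    "DQ c1 c2 a b (vector [0,0,0,0,0,1]) v = 0"
  unfolding Qc_def DQ_def by simp_all


lemma line_eq: "(\<chi> j. if j = i then x$j + t else x$j) = x + t *s axis i (1::complex)"
  by (simp add: vec_eq_iff axis_def)

lemma mv_smult: "(B::complex^'n^'m) *v (t *s v) = t *s (B *v v)"
  by (simp add: vec_eq_iff matrix_vector_mult_def sum_distrib_left algebra_simps)

lemma Qc_scale: "Qc c1 c2 a b (s *s u) = s^3 * Qc c1 c2 a b u"
  using Qc_expand[of c1 c2 a b s u 0 u] by simp

lemma partial_QB:
  "partial (\<lambda>x. Qc c1 c2 a b (B *v x)) i x = DQ c1 c2 a b (B *v x) (B *v axis i 1)"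
proof -
  define u where "u = B *v x"
  define v where "v = B *v axis i (1::complex)"
  have eq: "(\<lambda>t. Qc c1 c2 a b (B *v (\<chi> j. if j = i then x$j + t else x$j))) =
     (\<lambda>t. Qc c1 c2 a b u + t * DQ c1 c2 a b u v + t^2 * DQ c1 c2 a b v u + t^3 * Qc c1 c2 a b v)"
  proof
    fix t
    have "B *v (\<chi> j. if j = i then x$j + t else x$j) = 1 *s u + t *s v"
      unfolding line_eq u_def v_def by (simp add: matrix_vector_right_distrib mv_smult)
    then show "Qc c1 c2 a b (B *v (\<chi> j. if j = i then x$j + t else x$j)) =
     Qc c1 c2 a b u + t * DQ c1 c2 a b u v + t^2 * DQ c1 c2 a b v u + t^3 * Qc c1 c2 a b v"
      using Qc_expand[of c1 c2 a b 1 u t v] by simp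
  qed
  have "((\<lambda>t. Qc c1 c2 a b u + t * DQ c1 c2 a b u v + t^2 * DQ c1 c2 a b v u + t^3 * Qc c1 c2 a b v)
     has_field_derivative DQ c1 c2 a b u v) (at 0)"
    by (auto intro!: derivative_eq_intros)
  then show ?thesis
    unfolding partial_def eq u_def[symmetric] v_def[symmetric] by (rule DERIV_imp_deriv)
qed

lemma onW:
  assumes "w \<in> weierstrass_sextic a b"
  shows "Qc c1 c2 a b w = 0 \<and> (\<forall>v. DQ c1 c2 a b w v = 0)"
  using assms unfolding weierstrass_sextic_def
  by (auto simp: W_aff W_inf)

lemma cone_mem:
  assumes "x \<in> cone ((\<lambda>v. A *v v) ` W)"
  obtains s w where "s \<noteq> 0" "w \<in> W" "x = s *s (A *v w)"
  using assms unfolding cone_def by auto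

lemma BA_apply:
  assumes "B ** A = mat 1" "x = s *s (A *v w)"
  shows "B *v x = s *s (w :: complex^6)"
  using assms by (simp add: mv_smult matrix_vector_mul_assoc)

lemma sing_C:
  assumes BA: "B ** A = mat 1" and x: "x \<in> cone ((\<lambda>v. A *v v) ` weierstrass_sextic a b)"
  shows "Qc c1 c2 a b (B *v x) = 0" "partial (\<lambda>x. Qc c1 c2 a b (B *v x)) i x = 0"
proof -
  obtain s w where w: "w \<in> weierstrass_sextic a b" "x = s *s (A *v w)"
    using cone_mem[OF x] by metis
  have Bx: "B *v x = s *s w" using BA_apply[OF BA w(2)] .
  show "Qc c1 c2 a b (B *v x) = 0" unfolding Bx Qc_scale using onW[OF w(1)] by simp
  show "partial (\<lambda>x. Qc c1 c2 a b (B *v x)) i x = 0"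
    unfolding partial_QB Bx DQ_scale using onW[OF w(1)] by simp
qed

lemma secant_C:
  assumes BA: "B ** A = mat 1"
    and u: "u \<in> cone ((\<lambda>v. A *v v) ` weierstrass_sextic a b)"
    and v: "v \<in> cone ((\<lambda>v. A *v v) ` weierstrass_sextic a b)"
  shows "Qc c1 c2 a b (B *v (s *s u + t *s v)) = 0"
proof -
  obtain s1 w1 where w1: "w1 \<in> weierstrass_sextic a b" "u = s1 *s (A *v w1)"
    using cone_mem[OF u] by metis
  obtain s2 w2 where w2: "w2 \<in> weierstrass_sextic a b" "v = s2 *s (A *v w2)"
    using cone_mem[OF v] by metis
  have "B *v (s *s u + t *s v) = (s * s1) *s w1 + (t * s2) *s w2"
    using BA_apply[OF BA w1(2)] BA_apply[OF BA w2(2)]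
    by (simp add: matrix_vector_right_distrib mv_smult vector_smult_assoc)
  then show ?thesis using onW[OF w1(1)] onW[OF w2(1)] by (simp add: Qc_expand)
qed

lemma Qc_e1: "Qc c1 c2 a b (vector [0,0,0,1,0,0]) = c2"
  unfolding Qc_def by simp
lemma Qc_e2: "Qc c1 c2 a b (vector [0,0,1,1,0,0]) = c2 - c1"
  unfolding Qc_def by simp

lemma indep:
  assumes BA: "B ** A = mat 1" and z: "\<forall>x. Qc c1 c2 a b (B *v x) = 0"
  shows "c1 = 0 \<and> c2 = 0"
proof -
  have h: "B *v (A *v e) = e" for e :: "complex^6"
    using BA_apply[OF BA, of "A *v e" 1 e] by simp
  have "Qc c1 c2 a b (B *v (A *v vector [0,0,0,1,0,0])) = c2"
    unfolding h by (rule Qc_e1)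
  moreover have "Qc c1 c2 a b (B *v (A *v vector [0,0,1,1,0,0])) = c2 - c1"
    unfolding h by (rule Qc_e2)
  ultimately show ?thesis using z by (metis eq_iff_diff_eq_0)
qed

lemma exhaust_6: fixes x :: 6 shows "x = 0 \<or> x = 1 \<or> x = 2 \<or> x = 3 \<or> x = 4 \<or> x = 5"
proof (induct x)
  case (of_int z)
  then have "z = 0 \<or> z = 1 \<or> z = 2 \<or> z = 3 \<or> z = 4 \<or> z = 5" by fastforce
  then show ?case by auto
qed

lemma exhaust_9: fixes x :: 9 shows "x = 0 \<or> x = 1 \<or> x = 2 \<or> x = 3 \<or> x = 4 \<or> x = 5 \<or> x = 6 \<or> x = 7 \<or> x = 8"
proof (induct x)
  case (of_int z)
  then have "z = 0 \<or> z = 1 \<or> z = 2 \<or> z = 3 \<or> z = 4 \<or> z = 5 \<or> z = 6 \<or> z = 7 \<or> z = 8" by fastforce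
  then show ?case by auto
qed

definition m3 :: "6 \<times> 6 \<times> 6 \<Rightarrow> complex^6 \<Rightarrow> complex" where
  "m3 t x = (case t of (a,b,c) \<Rightarrow> x$a * x$b * x$c)"

definition dm3 :: "6 \<times> 6 \<times> 6 \<Rightarrow> 6 \<Rightarrow> complex^6 \<Rightarrow> complex" where
  "dm3 t i x = (case t of (a,b,c) \<Rightarrow> (if a = i then x$b * x$c else 0) + (if b = i then x$a * x$c else 0)
       + (if c = i then x$a * x$b else 0))"

definition colT :: "9 \<times> 6 \<Rightarrow> 6 \<times> 6 \<times> 6" where
  "colT r = (case r of (k,i) \<Rightarrow> ( if k = 0 then (if i = 0 then (0,0,0) else if i = 1 then (0,0,1) else if i = 2 then (0,0,2) else if i = 3 then (0,0,3) else if i = 4 then (0,0,4) else (0,0,5)) else if k = 1 then (if i = 0 then (0,1,1) else if i = 1 then (1,1,1) else if i = 2 then (1,1,2) else if i = 3 then (1,1,3) else if i = 4 then (1,1,4) else (1,1,5)) else if k = 2 then (if i = 0 then (0,2,2) else if i = 1 then (1,2,2) else if i = 2 then (2,2,2) else if i = 3 then (2,2,3) else if i = 4 then (2,2,4) else (2,2,5)) else if k = 3 then (if i = 0 then (0,3,3) else if i = 1 then (1,3,3) else if i = 2 then (2,3,3) else if i = 3 then (3,3,3) else if i = 4 then (3,3,4) else (3,3,5)) else if k = 4 then (if i = 0 then (0,4,4) else if i = 1 then (1,4,4) else if i = 2 then (2,4,4) else if i = 3 then (3,4,4) else if i = 4 then (4,4,4) else (4,4,5)) else if k = 5 then (if i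 = 0 then (0,5,5) else if i = 1 then (1,5,5) else if i = 2 then (2,5,5) else if i = 3 then (3,5,5) else if i = 4 then (4,5,5) else (5,5,5)) else if k = 6 then (if i = 0 then (0,1,2) else if i = 1 then (0,1,3) else if i = 2 then (0,1,4) else if i = 3 then (0,1,5) else if i = 4 then (0,2,3) else (0,3,4)) else if k = 7 then (if i = 0 then (0,3,5) else if i = 1 then (0,4,5) else if i = 2 then (1,2,3) else if i = 3 then (1,2,4) else if i = 4 then (1,2,5) else (1,3,4)) else (if i = 0 then (1,3,5) else if i = 1 then (1,4,5) else if i = 2 then (2,3,4) else if i = 3 then (2,3,5) else if i = 4 then (2,4,5) else (3,4,5)) ))"

definition EP :: "(9 \<times> 6) list" where "EP = [(0,0), (0,1), (0,2), (0,3), (0,4), (0,5), (1,0), (1,1), (1,2), (1,3), (1,4), (1,5), (2,0), (2,1), (2,2), (2,3), (2,4), (2,5), (3,0), (3,1), (3,2), (3,3), (3,4), (3,5), (4,0), (4,1), (4,2), (4,3), (4,4), (4,5), (5,0), (5,1), (5,2), (5,3), (5,4), (5,5), (6,0), (6,1), (6,2), (6,3), (6,4), (6,5), (7,0), (7,1), (7,2), (7,3), (7,4), (7,5), (8,0), (8,1), (8,2), (8,3), (8,4), (8,5)]"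

definition TL :: "(6 \<times> 6 \<times> 6) list" where "TL = (0,2,4) # (0,2,5) # map colT EP"

definition TT :: "(6 \<times> 6 \<times> 6) set" where "TT = set TL"

lemma TL_eval: "TL = [(0,2,4), (0,2,5), (0,0,0), (0,0,1), (0,0,2), (0,0,3), (0,0,4), (0,0,5), (0,1,1), (1,1,1), (1,1,2), (1,1,3), (1,1,4), (1,1,5), (0,2,2), (1,2,2), (2,2,2), (2,2,3), (2,2,4), (2,2,5), (0,3,3), (1,3,3), (2,3,3), (3,3,3), (3,3,4), (3,3,5), (0,4,4), (1,4,4), (2,4,4), (3,4,4), (4,4,4), (4,4,5), (0,5,5), (1,5,5), (2,5,5), (3,5,5), (4,5,5), (5,5,5), (0,1,2), (0,1,3), (0,1,4), (0,1,5), (0,2,3), (0,3,4), (0,3,5), (0,4,5), (1,2,3), (1,2,4), (1,2,5), (1,3,4), (1,3,5), (1,4,5), (2,3,4), (2,3,5), (2,4,5), (3,4,5)]"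
  by (simp add: TL_def EP_def colT_def)

lemma EP_UNIV: "set EP = UNIV"
proof -
  have "(k,i) \<in> set EP" for k i
    using exhaust_9[of k] exhaust_6[of i] by (elim disjE) (simp_all add: EP_def)
  then show ?thesis by auto
qed

lemma TL_distinct: "distinct TL"
  unfolding TL_eval by simp

lemma inj_colT: "inj colT"
proof -
  have "distinct (map colT EP)" using TL_distinct by (simp add: TL_def)
  then show ?thesis using EP_UNIV by (simp add: distinct_map)
qed

lemma TT_eq: "TT = insert (0,2,4) (insert (0,2,5) (range colT))"
  by (simp add: TT_def TL_def EP_UNIV)

lemma j_notin: "(0,2,4) \<notin> range colT" "(0,2,5) \<notin> range colT"
  using TL_distinct by (simp_all add: TL_def EP_UNIV)

lemma finite_TT: "finite TT" by (simp add: TT_def)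

definition r6 :: "6 \<Rightarrow> nat" where
  "r6 x = (if x = 0 then 0 else if x = 1 then 1 else if x = 2 then 2 else if x = 3 then 3
     else if x = 4 then 4 else 5)"

lemma sorted_in_TT: "r6 a \<le> r6 b \<Longrightarrow> r6 b \<le> r6 c \<Longrightarrow> (a,b,c) \<in> TT"
  unfolding TT_def TL_eval
  using exhaust_6[of a] exhaust_6[of b] exhaust_6[of c]
  by (elim disjE) (simp_all add: r6_def)

lemma cover: "\<exists>t\<in>TT. m3 t = m3 (a,b,c)"
proof -
  consider "r6 a \<le> r6 b" "r6 b \<le> r6 c" | "r6 a \<le> r6 c" "r6 c \<le> r6 b" | "r6 b \<le> r6 a" "r6 a \<le> r6 c"
    | "r6 b \<le> r6 c" "r6 c \<le> r6 a" | "r6 c \<le> r6 a" "r6 a \<le> r6 b" | "r6 c \<le> r6 b" "r6 b \<le> r6 a"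
    by linarith
  then show ?thesis
  proof cases
    case 1 then show ?thesis using sorted_in_TT[of a b c] by blast
  next
    case 2 then show ?thesis using sorted_in_TT[of a c b] by (intro bexI[of _ "(a,c,b)"]) (auto simp: m3_def fun_eq_iff mult_ac)
  next
    case 3 then show ?thesis using sorted_in_TT[of b a c] by (intro bexI[of _ "(b,a,c)"]) (auto simp: m3_def fun_eq_iff mult_ac)
  next
    case 4 then show ?thesis using sorted_in_TT[of b c a] by (intro bexI[of _ "(b,c,a)"]) (auto simp: m3_def fun_eq_iff mult_ac)
  next
    case 5 then show ?thesis using sorted_in_TT[of c a b] by (intro bexI[of _ "(c,a,b)"]) (auto simp: m3_def fun_eq_iff mult_ac)
  next
    case 6 then show ?thesis using sorted_in_TT[of c b a] by (intro bexI[of _ "(c,b,a)"]) (auto simp: m3_def fun_eq_iff mult_ac)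
  qed
qed

lemma m3_deriv: "((\<lambda>s. m3 t (x + s *s axis i 1)) has_field_derivative dm3 t i x) (at 0)"
proof -
  obtain a b c where t: "t = (a,b,c)" by (cases t) auto
  have "((\<lambda>s. (x$a + s * axis i 1 $ a) * (x$b + s * axis i 1 $ b) * (x$c + s * axis i 1 $ c))
     has_field_derivative dm3 t i x) (at 0)"
    unfolding t dm3_def by (auto intro!: derivative_eq_intros simp: axis_def)
  then show ?thesis unfolding t m3_def by simp
qed

lemma partial_rep:
  assumes "finite S"
  shows "partial (\<lambda>x. \<Sum>t\<in>S. d t * m3 t x) i x = (\<Sum>t\<in>S. d t * dm3 t i x)"
proof -
  have "((\<lambda>s. \<Sum>t\<in>S. d t * m3 t (x + s *s axis i 1)) has_field_derivative (\<Sum>t\<in>S. d t * dm3 t i x)) (at 0)"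
    by (intro DERIV_sum DERIV_cmult m3_deriv)
  then show ?thesis unfolding partial_def line_eq by (rule DERIV_imp_deriv)
qed

definition trirep :: "(complex^6 \<Rightarrow> complex) \<Rightarrow> bool" where
  "trirep f \<longleftrightarrow> (\<exists>d. f = (\<lambda>x. \<Sum>t\<in>TT. d t * m3 t x))"

lemma trirep_gen:
  assumes "finite S"
  shows "trirep (\<lambda>x. \<Sum>s\<in>S. e s * m3 (g s) x)"
proof -
  define \<tau> where "\<tau> t = (SOME t'. t' \<in> TT \<and> m3 t' = m3 t)" for t
  have \<tau>: "\<tau> t \<in> TT \<and> m3 (\<tau> t) = m3 t" for t
  proof -
    obtain a b c where "t = (a,b,c)" by (cases t) auto
    then have "\<exists>t'. t' \<in> TT \<and> m3 t' = m3 t" using cover by blast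
    then show ?thesis unfolding \<tau>_def by (rule someI_ex)
  qed
  define d where "d t' = (\<Sum>s\<in>{s. s \<in> S \<and> \<tau> (g s) = t'}. e s)" for t'
  have "(\<Sum>t\<in>TT. d t * m3 t x) = (\<Sum>s\<in>S. e s * m3 (g s) x)" for x
  proof -
    have "(\<Sum>t\<in>TT. d t * m3 t x) = (\<Sum>t\<in>TT. \<Sum>s\<in>{s. s \<in> S \<and> \<tau> (g s) = t}. e s * m3 (g s) x)"
    proof (rule sum.cong[OF refl])
      fix t assume "t \<in> TT"
      have "(\<Sum>s\<in>{s. s \<in> S \<and> \<tau> (g s) = t}. e s * m3 (g s) x) = (\<Sum>s\<in>{s. s \<in> S \<and> \<tau> (g s) = t}. e s * m3 t x)"
        by (rule sum.cong[OF refl]) (metis (mono_tags, lifting) \<tau> mem_Collect_eq)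
      then show "d t * m3 t x = (\<Sum>s\<in>{s. s \<in> S \<and> \<tau> (g s) = t}. e s * m3 (g s) x)"
        by (simp add: d_def sum_distrib_right)
    qed
    also have "\<dots> = (\<Sum>s\<in>S. e s * m3 (g s) x)"
    proof -
      have "(\<lambda>s. \<tau> (g s)) ` S \<subseteq> TT" using \<tau> by blast
      then show ?thesis by (rule sum.group[OF assms finite_TT])
    qed
    finally show ?thesis .
  qed
  then show ?thesis unfolding trirep_def by (intro exI[of _ d]) auto
qed

lemma trirep_add: "trirep f \<Longrightarrow> trirep g \<Longrightarrow> trirep (\<lambda>x. f x + g x)"
proof -
  assume "trirep f" "trirep g"
  then obtain d d' where "f = (\<lambda>x. \<Sum>t\<in>TT. d t * m3 t x)" "g = (\<lambda>x. \<Sum>t\<in>TT. d' t * m3 t x)"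
    unfolding trirep_def by blast
  then show ?thesis unfolding trirep_def
    by (intro exI[of _ "\<lambda>t. d t + d' t"]) (simp add: distrib_right sum.distrib)
qed

lemma trirep_cmult: "trirep f \<Longrightarrow> trirep (\<lambda>x. c * f x)"
proof -
  assume "trirep f"
  then obtain d where "f = (\<lambda>x. \<Sum>t\<in>TT. d t * m3 t x)"
    unfolding trirep_def by blast
  then show ?thesis unfolding trirep_def
    by (intro exI[of _ "\<lambda>t. c * d t"]) (simp add: sum_distrib_left mult.assoc)
qed

lemma triple_prod:
  fixes f g h :: "'a \<Rightarrow> complex"
  shows "(\<Sum>j\<in>A. f j) * (\<Sum>k\<in>A. g k) * (\<Sum>l\<in>A. h l) = (\<Sum>j\<in>A. \<Sum>k\<in>A. \<Sum>l\<in>A. f j * (g k * h l))"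
proof -
  have "(\<Sum>j\<in>A. f j) * (\<Sum>k\<in>A. g k) * (\<Sum>l\<in>A. h l) = (\<Sum>j\<in>A. f j * ((\<Sum>k\<in>A. g k) * (\<Sum>l\<in>A. h l)))"
    by (simp add: sum_distrib_right mult.assoc)
  also have "\<dots> = (\<Sum>j\<in>A. f j * (\<Sum>k\<in>A. \<Sum>l\<in>A. g k * h l))"
    by (simp add: sum_product)
  also have "\<dots> = (\<Sum>j\<in>A. \<Sum>k\<in>A. \<Sum>l\<in>A. f j * (g k * h l))"
    by (simp add: sum_distrib_left)
  finally show ?thesis .
qed

lemma m3_B: "m3 (a,b,c) ((B::complex^6^6) *v x) =
   (\<Sum>s\<in>UNIV. (case s of (j,k,l) \<Rightarrow> B$a$j * B$b$k * B$c$l) * m3 s x)"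
proof -
  have "m3 (a,b,c) (B *v x) = (\<Sum>j\<in>UNIV. B$a$j * x$j) * (\<Sum>k\<in>UNIV. B$b$k * x$k) * (\<Sum>l\<in>UNIV. B$c$l * x$l)"
    by (simp add: m3_def matrix_vector_mult_def)
  also have "\<dots> = (\<Sum>j\<in>UNIV. \<Sum>k\<in>UNIV. \<Sum>l\<in>UNIV. (B$a$j * x$j) * ((B$b$k * x$k) * (B$c$l * x$l)))"
    by (rule triple_prod)
  also have "\<dots> = (\<Sum>j\<in>UNIV. \<Sum>kl\<in>UNIV. (case kl of (k,l) \<Rightarrow> (B$a$j * x$j) * ((B$b$k * x$k) * (B$c$l * x$l))))"
    by (simp only: sum.cartesian_product UNIV_Times_UNIV)
  also have "\<dots> = (\<Sum>s\<in>UNIV. (case s of (j,k,l) \<Rightarrow> (B$a$j * x$j) * ((B$b$k * x$k) * (B$c$l * x$l))))"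
    by (simp only: sum.cartesian_product UNIV_Times_UNIV split_def)
  also have "\<dots> = (\<Sum>s\<in>UNIV. (case s of (j,k,l) \<Rightarrow> B$a$j * B$b$k * B$c$l) * m3 s x)"
    by (rule sum.cong[OF refl]) (auto simp: m3_def mult_ac)
  finally show ?thesis .
qed

lemma trirep_m3B: "trirep (\<lambda>x. m3 t ((B::complex^6^6) *v x))"
proof -
  obtain a b c where t: "t = (a,b,c)" by (cases t) auto
  show ?thesis unfolding t m3_B using trirep_gen[of UNIV _ id] by simp
qed

lemma Qc_m3: "Qc c1 c2 a b u = (b*c1) * m3 (1,1,4) u + (-1 * b*c2) * m3 (1,1,0) u + (-1 * b*c1) * m3 (1,2,2) u + (a*c1 + 2 * b*c2) * m3 (1,2,4) u + (-1 * a*c2) * m3 (1,2,0) u + (a*c2) * m3 (1,4,4) u + (c1) * m3 (1,4,0) u + (-1 * c1) * m3 (1,5,5) u + (-1 * a*c1 + -1 * b*c2) * m3 (2,2,2) u + (-1 * c1) * m3 (2,2,0) u + (2 * c1) * m3 (2,3,5) u + (-1 * c2) * m3 (2,4,0) u + (c2) * m3 (2,5,5) u + (-1 * c1) * m3 (3,3,4) u + (c2) * m3 (3,3,0) u + (-2 * c2) * m3 (3,4,5) u + (c2) * m3 (4,4,4) u"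
  by (simp add: Qc_def m3_def)

lemma trirep_QcB: "trirep (\<lambda>x. Qc c1 c2 a b ((B::complex^6^6) *v x))"
  unfolding Qc_m3 by (intro trirep_add trirep_cmult trirep_m3B)

lemma Qc_lin: "Qc c1 c2 a b u = c1 * Qc 1 0 a b u + c2 * Qc 0 1 a b u"
  by (simp add: Qc_def algebra_simps)

definition Mx :: "(9 \<Rightarrow> complex^6) \<Rightarrow> complex^(9\<times>6)^(9\<times>6)" where
  "Mx p = (\<chi> r c. dm3 (colT c) (snd r) (p (fst r)))"

lemma kernel:
  assumes det: "det (Mx p) \<noteq> 0"
    and rows: "\<forall>k i. (\<Sum>t\<in>TT. d t * dm3 t i (p k)) = 0"
    and z1: "d (0,2,4) = 0" and z2: "d (0,2,5) = 0"
  shows "\<forall>t\<in>TT. d t = 0"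
proof -
  define v where "v = (\<chi> c. d (colT c))"
  have "Mx p *v v = 0"
  proof (subst vec_eq_iff, intro allI)
    fix r :: "9 \<times> 6"
    obtain k i where r: "r = (k,i)" by (cases r) auto
    have "(Mx p *v v) $ r = (\<Sum>c\<in>UNIV. dm3 (colT c) i (p k) * d (colT c))"
      by (simp add: matrix_vector_mult_def Mx_def v_def r)
    also have "\<dots> = (\<Sum>t\<in>range colT. dm3 t i (p k) * d t)"
      using sum.reindex[OF inj_colT, of "\<lambda>t. dm3 t i (p k) * d t"] by simp
    also have "\<dots> = (\<Sum>t\<in>TT. d t * dm3 t i (p k))"
      unfolding TT_eq using j_notin z1 z2 by (simp add: mult.commute)
    also have "\<dots> = 0" using rows by blast
    finally show "(Mx p *v v) $ r = 0 $ r" by simp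
  qed
  moreover have "\<forall>x. Mx p *v x = 0 \<longrightarrow> x = 0"
  proof (intro allI impI)
    fix x assume x0: "Mx p *v x = 0"
    have "invertible (Mx p)" using det invertible_det_nz by blast
    then obtain B where B: "B ** Mx p = mat 1" using invertible_left_inverse by blast
    have "x = (B ** Mx p) *v x" by (simp add: B)
    also have "\<dots> = B *v (Mx p *v x)" by (simp add: matrix_vector_mul_assoc)
    finally show "x = 0" using x0 by simp
  qed
  ultimately have "v = 0" by blast
  then have "d (colT c) = 0" for c
    unfolding v_def by (metis vec_lambda_beta zero_index)
  then show ?thesis unfolding TT_eq using z1 z2 by auto
qed

definition linrow :: "(9 \<Rightarrow> complex^6) \<Rightarrow> (6\<times>6\<times>6 \<Rightarrow> complex) \<Rightarrow> bool" where
  "linrow p r \<longleftrightarrow> (\<forall>k i. (\<Sum>t\<in>TT. r t * dm3 t i (p k)) = 0)"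

lemma linrow_comb:
  assumes "linrow p r1" "linrow p r2" "linrow p r3"
  shows "linrow p (\<lambda>t. a1 * r1 t + a2 * r2 t + a3 * r3 t)"
proof -
  have "(\<Sum>t\<in>TT. (a1 * r1 t + a2 * r2 t + a3 * r3 t) * dm3 t i (p k)) =
     a1 * (\<Sum>t\<in>TT. r1 t * dm3 t i (p k)) + a2 * (\<Sum>t\<in>TT. r2 t * dm3 t i (p k))
     + a3 * (\<Sum>t\<in>TT. r3 t * dm3 t i (p k))" for k i
    by (simp add: sum.distrib sum_distrib_left distrib_right mult.assoc)
  then show ?thesis using assms unfolding linrow_def by simp
qed

lemma kernel_fun:
  assumes "det (Mx p) \<noteq> 0" "linrow p r" "r (0,2,4) = 0" "r (0,2,5) = 0"
  shows "(\<Sum>t\<in>TT. r t * m3 t x) = 0"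
  using kernel[of p r] assms unfolding linrow_def by simp

lemma rep_comb:
  "(\<Sum>t\<in>TT. (a1 * r1 t + a2 * r2 t + a3 * r3 t) * m3 t x) =
     a1 * (\<Sum>t\<in>TT. r1 t * m3 t x) + a2 * (\<Sum>t\<in>TT. r2 t * m3 t x) + a3 * (\<Sum>t\<in>TT. r3 t * m3 t x)"
  by (simp add: sum.distrib sum_distrib_left distrib_right mult.assoc)

lemma cramer1: assumes "(D::complex) = q1 * r2 - q2 * r1" "D \<noteq> 0"
  shows "(- ((d1 * r2 - q2 * d2) / D)) * q1 + (- ((q1 * d2 - d1 * r1) / D)) * q2 + 1 * d1 = 0"
proof -
  have "(- ((d1 * r2 - q2 * d2) / D)) * q1 + (- ((q1 * d2 - d1 * r1) / D)) * q2 + 1 * d1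
     = (- (d1 * r2 - q2 * d2) * q1 - (q1 * d2 - d1 * r1) * q2 + d1 * D) / D"
    using assms(2) by (simp add: field_simps)
  also have "\<dots> = 0" unfolding assms(1) by (simp add: algebra_simps)
  finally show ?thesis .
qed
lemma cramer2: assumes "(D::complex) = q1 * r2 - q2 * r1" "D \<noteq> 0"
  shows "(- ((d1 * r2 - q2 * d2) / D)) * r1 + (- ((q1 * d2 - d1 * r1) / D)) * r2 + 1 * d2 = 0"
proof -
  have "(- ((d1 * r2 - q2 * d2) / D)) * r1 + (- ((q1 * d2 - d1 * r1) / D)) * r2 + 1 * d2
     = (- (d1 * r2 - q2 * d2) * r1 - (q1 * d2 - d1 * r1) * r2 + d2 * D) / D"
    using assms(2) by (simp add: field_simps)
  also have "\<dots> = 0" unfolding assms(1) by (simp add: algebra_simps)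
  finally show ?thesis .
qed

lemma combine:
  fixes F F1 F2 :: "complex^6 \<Rightarrow> complex"
  assumes det: "det (Mx p) \<noteq> 0"
    and F: "F = (\<lambda>x. \<Sum>t\<in>TT. d t * m3 t x)"
    and F1: "F1 = (\<lambda>x. \<Sum>t\<in>TT. q1 t * m3 t x)"
    and F2: "F2 = (\<lambda>x. \<Sum>t\<in>TT. q2 t * m3 t x)"
    and rF: "\<forall>k i. partial F i (p k) = 0"
    and rF1: "\<forall>k i. partial F1 i (p k) = 0"
    and rF2: "\<forall>k i. partial F2 i (p k) = 0"
    and indep: "\<forall>l1 l2. (\<forall>x. l1 * F1 x + l2 * F2 x = 0) \<longrightarrow> l1 = 0 \<and> l2 = 0"
  shows "\<exists>l1 l2. \<forall>x. F x = l1 * F1 x + l2 * F2 x"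
proof -
  have ld: "linrow p d" using rF unfolding F linrow_def by (simp add: partial_rep finite_TT)
  have l1: "linrow p q1" using rF1 unfolding F1 linrow_def by (simp add: partial_rep finite_TT)
  have l2: "linrow p q2" using rF2 unfolding F2 linrow_def by (simp add: partial_rep finite_TT)
  define J1 :: "6\<times>6\<times>6" where "J1 = (0,2,4)"
  define J2 :: "6\<times>6\<times>6" where "J2 = (0,2,5)"
  define D where "D = q1 J1 * q2 J2 - q2 J1 * q1 J2"
  show ?thesis
  proof (cases "D = 0")
    case True
    obtain a1 a2 where a: "a1 * q1 J1 + a2 * q2 J1 = 0" "a1 * q1 J2 + a2 * q2 J2 = 0" "a1 \<noteq> 0 \<or> a2 \<noteq> 0"
    proof (cases "q1 J1 = 0 \<and> q1 J2 = 0")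
      case True then show ?thesis using that[of 1 0] by simp
    next
      case False
      then show ?thesis
      proof (cases "q1 J1 = 0")
        case True
        then have "q1 J2 \<noteq> 0" using False by simp
        then show ?thesis using that[of "q2 J2" "- q1 J2"] \<open>D = 0\<close> True unfolding D_def
          by (auto simp: algebra_simps)
      next
        case False
        then show ?thesis using that[of "q2 J1" "- q1 J1"] \<open>D = 0\<close> unfolding D_def
          by (auto simp: algebra_simps)
      qed
    qed
    have "linrow p (\<lambda>t. a1 * q1 t + a2 * q2 t + 0 * d t)" by (rule linrow_comb[OF l1 l2 ld])
    then have h: "(\<Sum>t\<in>TT. (a1 * q1 t + a2 * q2 t + 0 * d t) * m3 t x) = 0" for x
      using kernel_fun[OF det] a(1,2) unfolding J1_def J2_def by simp
    have "a1 * F1 x + a2 * F2 x = 0" for x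
      using h[of x] unfolding F1 F2 rep_comb by simp
    then have "\<forall>x. a1 * F1 x + a2 * F2 x = 0" by blast
    then show ?thesis using indep a(3) by blast
  next
    case False
    define b1 where "b1 = (d J1 * q2 J2 - q2 J1 * d J2) / D"
    define b2 where "b2 = (q1 J1 * d J2 - d J1 * q1 J2) / D"
    have "linrow p (\<lambda>t. (- b1) * q1 t + (- b2) * q2 t + 1 * d t)" by (rule linrow_comb[OF l1 l2 ld])
    moreover have "(- b1) * q1 J1 + (- b2) * q2 J1 + 1 * d J1 = 0"
      "(- b1) * q1 J2 + (- b2) * q2 J2 + 1 * d J2 = 0"
      unfolding b1_def b2_def using cramer1[OF D_def False] cramer2[OF D_def False] by simp_all
    ultimately have h: "(\<Sum>t\<in>TT. ((- b1) * q1 t + (- b2) * q2 t + 1 * d t) * m3 t x) = 0" for x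
      using kernel_fun[OF det] unfolding J1_def J2_def by blast
    have "F x = b1 * F1 x + b2 * F2 x" for x
    proof -
      have "F x = F x - ((- b1) * F1 x + (- b2) * F2 x + 1 * F x)"
        using h[of x] unfolding F F1 F2 rep_comb by simp
      also have "\<dots> = b1 * F1 x + b2 * F2 x" by (simp add: algebra_simps)
      finally show ?thesis .
    qed
    then show ?thesis by blast
  qed
qed

lemma alpha_step:
  fixes \<alpha> :: "6 \<Rightarrow> nat"
  assumes "sum \<alpha> UNIV = Suc n"
  shows "\<exists>a \<beta>. sum \<beta> UNIV = n \<and> (\<forall>x::complex^6. (\<Prod>i\<in>UNIV. x$i ^ \<alpha> i) = x$a * (\<Prod>i\<in>UNIV. x$i ^ \<beta> i))"
proof -
  obtain a where a: "\<alpha> a > 0"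
    using assms by (metis Zero_not_Suc gr0I sum.neutral_const sum.not_neutral_contains_not_neutral)
  define \<beta> where "\<beta> = \<alpha>(a := \<alpha> a - 1)"
  have "sum \<alpha> UNIV = \<alpha> a + sum \<alpha> (UNIV - {a})"
    by (simp add: sum.remove)
  moreover have "sum \<beta> UNIV = \<beta> a + sum \<beta> (UNIV - {a})"
    by (simp add: sum.remove)
  moreover have "sum \<beta> (UNIV - {a}) = sum \<alpha> (UNIV - {a})"
    unfolding \<beta>_def by (rule sum.cong) auto
  ultimately have "sum \<beta> UNIV = n" using assms a unfolding \<beta>_def by simp
  moreover have "(\<Prod>i\<in>UNIV. x$i ^ \<alpha> i) = x$a * (\<Prod>i\<in>UNIV. x$i ^ \<beta> i)" for x :: "complex^6"
  proof -
    have "(\<Prod>i\<in>UNIV. x$i ^ \<alpha> i) = x$a ^ \<alpha> a * (\<Prod>i\<in>UNIV - {a}. x$i ^ \<alpha> i)"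
      by (simp add: prod.remove)
    moreover have "(\<Prod>i\<in>UNIV. x$i ^ \<beta> i) = x$a ^ \<beta> a * (\<Prod>i\<in>UNIV - {a}. x$i ^ \<beta> i)"
      by (simp add: prod.remove)
    moreover have "(\<Prod>i\<in>UNIV - {a}. x$i ^ \<beta> i) = (\<Prod>i\<in>UNIV - {a}. x$i ^ \<alpha> i)"
      unfolding \<beta>_def by (rule prod.cong) auto
    moreover have "x$a ^ \<alpha> a = x$a * x$a ^ \<beta> a"
    proof -
      have "\<alpha> a = Suc (\<beta> a)" unfolding \<beta>_def using a by simp
      then show ?thesis by simp
    qed
    ultimately show ?thesis by simp
  qed
  ultimately show ?thesis by blast
qed

lemma alpha3:
  fixes \<alpha> :: "6 \<Rightarrow> nat"
  assumes "sum \<alpha> UNIV = 3"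
  shows "\<exists>t. \<forall>x. (\<Prod>i\<in>UNIV. x$i ^ \<alpha> i) = m3 t x"
proof -
  obtain a \<beta> where 1: "sum \<beta> UNIV = 2" "\<forall>x::complex^6. (\<Prod>i\<in>UNIV. x$i ^ \<alpha> i) = x$a * (\<Prod>i\<in>UNIV. x$i ^ \<beta> i)"
    using alpha_step[of \<alpha> 2] assms by (auto simp: numeral_eq_Suc)
  obtain b \<gamma> where 2: "sum \<gamma> UNIV = 1" "\<forall>x::complex^6. (\<Prod>i\<in>UNIV. x$i ^ \<beta> i) = x$b * (\<Prod>i\<in>UNIV. x$i ^ \<gamma> i)"
    using alpha_step[of \<beta> 1] 1 by (auto simp: numeral_eq_Suc)
  obtain c \<delta> where 3: "sum \<delta> UNIV = 0" "\<forall>x::complex^6. (\<Prod>i\<in>UNIV. x$i ^ \<gamma> i) = x$c * (\<Prod>i\<in>UNIV. x$i ^ \<delta> i)"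
    using alpha_step[of \<gamma> 0] 2(1) by (metis One_nat_def)
  have "\<delta> i = 0" for i using 3(1) by simp
  then have "(\<Prod>i\<in>UNIV. x$i ^ \<delta> i) = 1" for x :: "complex^6" by simp
  moreover have "(\<Prod>i\<in>UNIV. x$i ^ \<alpha> i) = x$a * (x$b * (x$c * (\<Prod>i\<in>UNIV. x$i ^ \<delta> i)))" for x :: "complex^6"
    by (simp only: 1(2)[rule_format] 2(2)[rule_format] 3(2)[rule_format])
  ultimately have "(\<Prod>i\<in>UNIV. x$i ^ \<alpha> i) = m3 (a,b,c) x" for x :: "complex^6"
    by (simp add: m3_def mult.assoc)
  then show ?thesis by blast
qed

lemma finite_S3: "finite {\<alpha> :: 6 \<Rightarrow> nat. sum \<alpha> UNIV = d}"
proof (rule finite_subset)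
  show "{\<alpha> :: 6 \<Rightarrow> nat. sum \<alpha> UNIV = d} \<subseteq> PiE UNIV (\<lambda>_. {..d})"
  proof
    fix \<alpha> :: "6 \<Rightarrow> nat" assume "\<alpha> \<in> {\<alpha>. sum \<alpha> UNIV = d}"
    then have "\<alpha> i \<le> d" for i using member_le_sum[of i UNIV \<alpha>] by simp
    then show "\<alpha> \<in> PiE UNIV (\<lambda>_. {..d})" by (simp add: PiE_UNIV_domain)
  qed
  show "finite (PiE UNIV (\<lambda>_. {..d}) :: (6 \<Rightarrow> nat) set)" by (rule finite_PiE) auto
qed

lemma hom_trirep:
  assumes "hom_poly 3 F"
  shows "trirep F"
proof -
  obtain c where F: "F = (\<lambda>x. \<Sum>\<alpha>\<in>{\<alpha>. sum \<alpha> UNIV = 3}. c \<alpha> * (\<Prod>i\<in>UNIV. (x$i) ^ (\<alpha> i)))"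
    using assms unfolding hom_poly_def by blast
  define g where "g \<alpha> = (SOME t. \<forall>x. (\<Prod>i\<in>UNIV. x$i ^ \<alpha> i) = m3 t x)" for \<alpha> :: "6 \<Rightarrow> nat"
  have g: "\<forall>x. (\<Prod>i\<in>UNIV. x$i ^ \<alpha> i) = m3 (g \<alpha>) x" if "\<alpha> \<in> {\<alpha>. sum \<alpha> UNIV = 3}" for \<alpha>
  proof -
    have "sum \<alpha> UNIV = 3" using that by simp
    then have "\<exists>t. \<forall>x. (\<Prod>i\<in>UNIV. x$i ^ \<alpha> i) = m3 t x" by (rule alpha3)
    then show ?thesis unfolding g_def by (rule someI_ex)
  qed
  have "F = (\<lambda>x. \<Sum>\<alpha>\<in>{\<alpha>. sum \<alpha> UNIV = 3}. c \<alpha> * m3 (g \<alpha>) x)"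
    unfolding F
  proof (rule ext, rule sum.cong[OF refl])
    fix x and \<alpha> :: "6 \<Rightarrow> nat" assume "\<alpha> \<in> {\<alpha>. sum \<alpha> UNIV = (3::nat)}"
    then show "c \<alpha> * (\<Prod>i\<in>UNIV. x$i ^ \<alpha> i) = c \<alpha> * m3 (g \<alpha>) x" using g by simp
  qed
  then show ?thesis using trirep_gen[OF finite_S3] by simp
qed

definition ptv :: "9 \<Rightarrow> 6 \<Rightarrow> complex" where
  "ptv k j = (if k = 0 then (if j = 0 then 1 else if j = 1 then 0 else if j = 2 then 0 else if j = 3 then 0 else if j = 4 then 0 else 0) else if k = 1 then (if j = 0 then 0 else if j = 1 then 1 else if j = 2 then 0 else if j = 3 then 0 else if j = 4 then 0 else 0) else if k = 2 then (if j = 0 then 0 else if j = 1 then 0 else if j = 2 then 1 else if j = 3 then 0 else if j = 4 then 0 else 0) else if k = 3 then (if j = 0 then 0 else if j = 1 then 0 else if j = 2 then 0 else if j = 3 then 1 else if j = 4 then 0 else 0) else if k = 4 then (if j = 0 then 0 else if j = 1 then 0 else if j = 2 then 0 else if j = 3 then 0 else if j = 4 then 1 else 0) else if k = 5 then (if j = 0 then 0 else if j = 1 then 0 else if j = 2 then 0 else if j = 3 then 0 else if j = 4 then 0 else 1) else if k = 6 then (if j = 0 then 0 else if j = 1 then 0 else if j = 2 then 1 else if j = 3 then 2 else if j = 4 then 1 else 1) else if k = 7 then (if j = 0 then 1 else if j = 1 then 1 else if j = 2 then 0 else if j = 3 then 0 else if j = 4 then 1 else 2) else (if j = 0 then 1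 else if j = 1 then 2 else if j = 2 then 1 else if j = 3 then 1 else if j = 4 then 0 else 0))"

definition pt0 :: "9 \<Rightarrow> complex^6" where "pt0 k = (\<chi> j. ptv k j)"

lemma distinct_EP: "distinct EP" by (simp add: EP_def)

lemma sum_UNIV96: "sum f (UNIV :: (9 \<times> 6) set) = sum_list (map f EP)"
  using sum.distinct_set_conv_list[OF distinct_EP, of f] EP_UNIV by simp


lemma CL_eq: "map colT EP = [(0,0,0), (0,0,1), (0,0,2), (0,0,3), (0,0,4), (0,0,5), (0,1,1), (1,1,1), (1,1,2), (1,1,3), (1,1,4), (1,1,5), (0,2,2), (1,2,2), (2,2,2), (2,2,3), (2,2,4), (2,2,5), (0,3,3), (1,3,3), (2,3,3), (3,3,3), (3,3,4), (3,3,5), (0,4,4), (1,4,4), (2,4,4), (3,4,4), (4,4,4), (4,4,5), (0,5,5), (1,5,5), (2,5,5), (3,5,5), (4,5,5), (5,5,5), (0,1,2), (0,1,3), (0,1,4), (0,1,5), (0,2,3), (0,3,4), (0,3,5), (0,4,5), (1,2,3), (1,2,4), (1,2,5), (1,3,4), (1,3,5), (1,4,5), (2,3,4), (2,3,5), (2,4,5), (3,4,5)]"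
  using TL_eval unfolding TL_def by simp

lemma map_zip_colT: "map (\<lambda>c. g (colT c) c) xs = map (\<lambda>(t,c). g t c) (zip (map colT xs) xs)"
  by (induct xs) auto

lemma pt0_vals:
  "pt0 0 $ 0 = 1"
  "pt0 0 $ 1 = 0"
  "pt0 0 $ 2 = 0"
  "pt0 0 $ 3 = 0"
  "pt0 0 $ 4 = 0"
  "pt0 0 $ 5 = 0"
  "pt0 1 $ 0 = 0"
  "pt0 1 $ 1 = 1"
  "pt0 1 $ 2 = 0"
  "pt0 1 $ 3 = 0"
  "pt0 1 $ 4 = 0"
  "pt0 1 $ 5 = 0"
  "pt0 2 $ 0 = 0"
  "pt0 2 $ 1 = 0"
  "pt0 2 $ 2 = 1"
  "pt0 2 $ 3 = 0"
  "pt0 2 $ 4 = 0"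
  "pt0 2 $ 5 = 0"
  "pt0 3 $ 0 = 0"
  "pt0 3 $ 1 = 0"
  "pt0 3 $ 2 = 0"
  "pt0 3 $ 3 = 1"
  "pt0 3 $ 4 = 0"
  "pt0 3 $ 5 = 0"
  "pt0 4 $ 0 = 0"
  "pt0 4 $ 1 = 0"
  "pt0 4 $ 2 = 0"
  "pt0 4 $ 3 = 0"
  "pt0 4 $ 4 = 1"
  "pt0 4 $ 5 = 0"
  "pt0 5 $ 0 = 0"
  "pt0 5 $ 1 = 0"
  "pt0 5 $ 2 = 0"
  "pt0 5 $ 3 = 0"
  "pt0 5 $ 4 = 0"
  "pt0 5 $ 5 = 1"
  "pt0 6 $ 0 = 0"
  "pt0 6 $ 1 = 0"
  "pt0 6 $ 2 = 1"
  "pt0 6 $ 3 = 2"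
  "pt0 6 $ 4 = 1"
  "pt0 6 $ 5 = 1"
  "pt0 7 $ 0 = 1"
  "pt0 7 $ 1 = 1"
  "pt0 7 $ 2 = 0"
  "pt0 7 $ 3 = 0"
  "pt0 7 $ 4 = 1"
  "pt0 7 $ 5 = 2"
  "pt0 8 $ 0 = 1"
  "pt0 8 $ 1 = 2"
  "pt0 8 $ 2 = 1"
  "pt0 8 $ 3 = 1"
  "pt0 8 $ 4 = 0"
  "pt0 8 $ 5 = 0"
  by (simp_all add: pt0_def ptv_def)

lemma witness_inj:
  assumes h: "Mx pt0 *v v = 0"
  shows "v = 0"
proof -
  have e: "(\<Sum>c\<in>UNIV. dm3 (colT c) i (pt0 k) * v $ c) = 0" for k i
  proof -
    have "(Mx pt0 *v v) $ (k,i) = 0" using h by simp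
    then show ?thesis by (simp add: matrix_vector_mult_def Mx_def)
  qed
  have z_0_0: "v $ (0,0) = 0"
    using e[of 0 0] unfolding sum_UNIV96 map_zip_colT[of "\<lambda>t c. dm3 t 0 (pt0 0) * v $ c"] CL_eq by (simp add: EP_def dm3_def pt0_vals)
  have z_0_1: "v $ (0,1) = 0"
    using e[of 1 0] unfolding sum_UNIV96 map_zip_colT[of "\<lambda>t c. dm3 t 1 (pt0 0) * v $ c"] CL_eq by (simp add: EP_def dm3_def pt0_vals)
  have z_0_2: "v $ (0,2) = 0"
    using e[of 2 0] unfolding sum_UNIV96 map_zip_colT[of "\<lambda>t c. dm3 t 2 (pt0 0) * v $ c"] CL_eq by (simp add: EP_def dm3_def pt0_vals)
  have z_0_3: "v $ (0,3) = 0"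
    using e[of 3 0] unfolding sum_UNIV96 map_zip_colT[of "\<lambda>t c. dm3 t 3 (pt0 0) * v $ c"] CL_eq by (simp add: EP_def dm3_def pt0_vals)
  have z_0_4: "v $ (0,4) = 0"
    using e[of 4 0] unfolding sum_UNIV96 map_zip_colT[of "\<lambda>t c. dm3 t 4 (pt0 0) * v $ c"] CL_eq by (simp add: EP_def dm3_def pt0_vals)
  have z_0_5: "v $ (0,5) = 0"
    using e[of 5 0] unfolding sum_UNIV96 map_zip_colT[of "\<lambda>t c. dm3 t 5 (pt0 0) * v $ c"] CL_eq by (simp add: EP_def dm3_def pt0_vals)
  have z_1_0: "v $ (1,0) = 0"
    using e[of 0 1] unfolding sum_UNIV96 map_zip_colT[of "\<lambda>t c. dm3 t 0 (pt0 1) * v $ c"] CL_eq by (simp add: EP_def dm3_def pt0_vals)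
  have z_1_1: "v $ (1,1) = 0"
    using e[of 1 1] unfolding sum_UNIV96 map_zip_colT[of "\<lambda>t c. dm3 t 1 (pt0 1) * v $ c"] CL_eq by (simp add: EP_def dm3_def pt0_vals)
  have z_1_2: "v $ (1,2) = 0"
    using e[of 2 1] unfolding sum_UNIV96 map_zip_colT[of "\<lambda>t c. dm3 t 2 (pt0 1) * v $ c"] CL_eq by (simp add: EP_def dm3_def pt0_vals)
  have z_1_3: "v $ (1,3) = 0"
    using e[of 3 1] unfolding sum_UNIV96 map_zip_colT[of "\<lambda>t c. dm3 t 3 (pt0 1) * v $ c"] CL_eq by (simp add: EP_def dm3_def pt0_vals)
  have z_1_4: "v $ (1,4) = 0"
    using e[of 4 1] unfolding sum_UNIV96 map_zip_colT[of "\<lambda>t c. dm3 t 4 (pt0 1) * v $ c"] CL_eq by (simp add: EP_def dm3_def pt0_vals)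
  have z_1_5: "v $ (1,5) = 0"
    using e[of 5 1] unfolding sum_UNIV96 map_zip_colT[of "\<lambda>t c. dm3 t 5 (pt0 1) * v $ c"] CL_eq by (simp add: EP_def dm3_def pt0_vals)
  have z_2_0: "v $ (2,0) = 0"
    using e[of 0 2] unfolding sum_UNIV96 map_zip_colT[of "\<lambda>t c. dm3 t 0 (pt0 2) * v $ c"] CL_eq by (simp add: EP_def dm3_def pt0_vals)
  have z_2_1: "v $ (2,1) = 0"
    using e[of 1 2] unfolding sum_UNIV96 map_zip_colT[of "\<lambda>t c. dm3 t 1 (pt0 2) * v $ c"] CL_eq by (simp add: EP_def dm3_def pt0_vals)
  have z_2_2: "v $ (2,2) = 0"
    using e[of 2 2] unfolding sum_UNIV96 map_zip_colT[of "\<lambda>t c. dm3 t 2 (pt0 2) * v $ c"] CL_eq by (simp add: EP_def dm3_def pt0_vals)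
  have z_2_3: "v $ (2,3) = 0"
    using e[of 3 2] unfolding sum_UNIV96 map_zip_colT[of "\<lambda>t c. dm3 t 3 (pt0 2) * v $ c"] CL_eq by (simp add: EP_def dm3_def pt0_vals)
  have z_2_4: "v $ (2,4) = 0"
    using e[of 4 2] unfolding sum_UNIV96 map_zip_colT[of "\<lambda>t c. dm3 t 4 (pt0 2) * v $ c"] CL_eq by (simp add: EP_def dm3_def pt0_vals)
  have z_2_5: "v $ (2,5) = 0"
    using e[of 5 2] unfolding sum_UNIV96 map_zip_colT[of "\<lambda>t c. dm3 t 5 (pt0 2) * v $ c"] CL_eq by (simp add: EP_def dm3_def pt0_vals)
  have z_3_0: "v $ (3,0) = 0"
    using e[of 0 3] unfolding sum_UNIV96 map_zip_colT[of "\<lambda>t c. dm3 t 0 (pt0 3) * v $ c"] CL_eq by (simp add: EP_def dm3_def pt0_vals)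
  have z_3_1: "v $ (3,1) = 0"
    using e[of 1 3] unfolding sum_UNIV96 map_zip_colT[of "\<lambda>t c. dm3 t 1 (pt0 3) * v $ c"] CL_eq by (simp add: EP_def dm3_def pt0_vals)
  have z_3_2: "v $ (3,2) = 0"
    using e[of 2 3] unfolding sum_UNIV96 map_zip_colT[of "\<lambda>t c. dm3 t 2 (pt0 3) * v $ c"] CL_eq by (simp add: EP_def dm3_def pt0_vals)
  have z_3_3: "v $ (3,3) = 0"
    using e[of 3 3] unfolding sum_UNIV96 map_zip_colT[of "\<lambda>t c. dm3 t 3 (pt0 3) * v $ c"] CL_eq by (simp add: EP_def dm3_def pt0_vals)
  have z_3_4: "v $ (3,4) = 0"
    using e[of 4 3] unfolding sum_UNIV96 map_zip_colT[of "\<lambda>t c. dm3 t 4 (pt0 3) * v $ c"] CL_eq by (simp add: EP_def dm3_def pt0_vals)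
  have z_3_5: "v $ (3,5) = 0"
    using e[of 5 3] unfolding sum_UNIV96 map_zip_colT[of "\<lambda>t c. dm3 t 5 (pt0 3) * v $ c"] CL_eq by (simp add: EP_def dm3_def pt0_vals)
  have z_4_0: "v $ (4,0) = 0"
    using e[of 0 4] unfolding sum_UNIV96 map_zip_colT[of "\<lambda>t c. dm3 t 0 (pt0 4) * v $ c"] CL_eq by (simp add: EP_def dm3_def pt0_vals)
  have z_4_1: "v $ (4,1) = 0"
    using e[of 1 4] unfolding sum_UNIV96 map_zip_colT[of "\<lambda>t c. dm3 t 1 (pt0 4) * v $ c"] CL_eq by (simp add: EP_def dm3_def pt0_vals)
  have z_4_2: "v $ (4,2) = 0"
    using e[of 2 4] unfolding sum_UNIV96 map_zip_colT[of "\<lambda>t c. dm3 t 2 (pt0 4) * v $ c"] CL_eq by (simp add: EP_def dm3_def pt0_vals)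
  have z_4_3: "v $ (4,3) = 0"
    using e[of 3 4] unfolding sum_UNIV96 map_zip_colT[of "\<lambda>t c. dm3 t 3 (pt0 4) * v $ c"] CL_eq by (simp add: EP_def dm3_def pt0_vals)
  have z_4_4: "v $ (4,4) = 0"
    using e[of 4 4] unfolding sum_UNIV96 map_zip_colT[of "\<lambda>t c. dm3 t 4 (pt0 4) * v $ c"] CL_eq by (simp add: EP_def dm3_def pt0_vals)
  have z_4_5: "v $ (4,5) = 0"
    using e[of 5 4] unfolding sum_UNIV96 map_zip_colT[of "\<lambda>t c. dm3 t 5 (pt0 4) * v $ c"] CL_eq by (simp add: EP_def dm3_def pt0_vals)
  have z_5_0: "v $ (5,0) = 0"
    using e[of 0 5] unfolding sum_UNIV96 map_zip_colT[of "\<lambda>t c. dm3 t 0 (pt0 5) * v $ c"] CL_eq by (simp add: EP_def dm3_def pt0_vals)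
  have z_5_1: "v $ (5,1) = 0"
    using e[of 1 5] unfolding sum_UNIV96 map_zip_colT[of "\<lambda>t c. dm3 t 1 (pt0 5) * v $ c"] CL_eq by (simp add: EP_def dm3_def pt0_vals)
  have z_5_2: "v $ (5,2) = 0"
    using e[of 2 5] unfolding sum_UNIV96 map_zip_colT[of "\<lambda>t c. dm3 t 2 (pt0 5) * v $ c"] CL_eq by (simp add: EP_def dm3_def pt0_vals)
  have z_5_3: "v $ (5,3) = 0"
    using e[of 3 5] unfolding sum_UNIV96 map_zip_colT[of "\<lambda>t c. dm3 t 3 (pt0 5) * v $ c"] CL_eq by (simp add: EP_def dm3_def pt0_vals)
  have z_5_4: "v $ (5,4) = 0"
    using e[of 4 5] unfolding sum_UNIV96 map_zip_colT[of "\<lambda>t c. dm3 t 4 (pt0 5) * v $ c"] CL_eq by (simp add: EP_def dm3_def pt0_vals)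
  have z_5_5: "v $ (5,5) = 0"
    using e[of 5 5] unfolding sum_UNIV96 map_zip_colT[of "\<lambda>t c. dm3 t 5 (pt0 5) * v $ c"] CL_eq by (simp add: EP_def dm3_def pt0_vals)
  have s_6_0: "2 * v $ (6,4) + (2 * v $ (6,5) + (2 * v $ (7,0) + (v $ (7,1)))) = 0"
    using e[of 0 6] unfolding sum_UNIV96 map_zip_colT[of "\<lambda>t c. dm3 t 0 (pt0 6) * v $ c"] CL_eq by (simp add: EP_def dm3_def pt0_vals z_0_0 z_0_1 z_0_2 z_0_3 z_0_4 z_0_5 z_1_0 z_1_1 z_1_2 z_1_3 z_1_4 z_1_5 z_2_0 z_2_1 z_2_2 z_2_3 z_2_4 z_2_5 z_3_0 z_3_1 z_3_2 z_3_3 z_3_4 z_3_5 z_4_0 z_4_1 z_4_2 z_4_3 z_4_4 z_4_5 z_5_0 z_5_1 z_5_2 z_5_3 z_5_4 z_5_5 add.assoc)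
  have s_6_1: "2 * v $ (7,2) + (v $ (7,3) + (v $ (7,4) + (2 * v $ (7,5) + (2 * v $ (8,0) + (v $ (8,1)))))) = 0"
    using e[of 1 6] unfolding sum_UNIV96 map_zip_colT[of "\<lambda>t c. dm3 t 1 (pt0 6) * v $ c"] CL_eq by (simp add: EP_def dm3_def pt0_vals z_0_0 z_0_1 z_0_2 z_0_3 z_0_4 z_0_5 z_1_0 z_1_1 z_1_2 z_1_3 z_1_4 z_1_5 z_2_0 z_2_1 z_2_2 z_2_3 z_2_4 z_2_5 z_3_0 z_3_1 z_3_2 z_3_3 z_3_4 z_3_5 z_4_0 z_4_1 z_4_2 z_4_3 z_4_4 z_4_5 z_5_0 z_5_1 z_5_2 z_5_3 z_5_4 z_5_5 add.assoc)
  have s_6_2: "2 * v $ (8,2) + (2 * v $ (8,3) + (v $ (8,4))) = 0"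
    using e[of 2 6] unfolding sum_UNIV96 map_zip_colT[of "\<lambda>t c. dm3 t 2 (pt0 6) * v $ c"] CL_eq by (simp add: EP_def dm3_def pt0_vals z_0_0 z_0_1 z_0_2 z_0_3 z_0_4 z_0_5 z_1_0 z_1_1 z_1_2 z_1_3 z_1_4 z_1_5 z_2_0 z_2_1 z_2_2 z_2_3 z_2_4 z_2_5 z_3_0 z_3_1 z_3_2 z_3_3 z_3_4 z_3_5 z_4_0 z_4_1 z_4_2 z_4_3 z_4_4 z_4_5 z_5_0 z_5_1 z_5_2 z_5_3 z_5_4 z_5_5 add.assoc)
  have s_6_3: "v $ (8,2) + (v $ (8,3) + (v $ (8,5))) = 0"
    using e[of 3 6] unfolding sum_UNIV96 map_zip_colT[of "\<lambda>t c. dm3 t 3 (pt0 6) * v $ c"] CL_eq by (simp add: EP_def dm3_def pt0_vals z_0_0 z_0_1 z_0_2 z_0_3 z_0_4 z_0_5 z_1_0 z_1_1 z_1_2 z_1_3 z_1_4 z_1_5 z_2_0 z_2_1 z_2_2 z_2_3 z_2_4 z_2_5 z_3_0 z_3_1 z_3_2 z_3_3 z_3_4 z_3_5 z_4_0 z_4_1 z_4_2 z_4_3 z_4_4 z_4_5 z_5_0 z_5_1 z_5_2 z_5_3 z_5_4 z_5_5 add.assoc)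
  have s_6_4: "2 * v $ (8,2) + (v $ (8,4) + (2 * v $ (8,5))) = 0"
    using e[of 4 6] unfolding sum_UNIV96 map_zip_colT[of "\<lambda>t c. dm3 t 4 (pt0 6) * v $ c"] CL_eq by (simp add: EP_def dm3_def pt0_vals z_0_0 z_0_1 z_0_2 z_0_3 z_0_4 z_0_5 z_1_0 z_1_1 z_1_2 z_1_3 z_1_4 z_1_5 z_2_0 z_2_1 z_2_2 z_2_3 z_2_4 z_2_5 z_3_0 z_3_1 z_3_2 z_3_3 z_3_4 z_3_5 z_4_0 z_4_1 z_4_2 z_4_3 z_4_4 z_4_5 z_5_0 z_5_1 z_5_2 z_5_3 z_5_4 z_5_5 add.assoc)
  have s_6_5: "2 * v $ (8,3) + (v $ (8,4) + (2 * v $ (8,5))) = 0"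
    using e[of 5 6] unfolding sum_UNIV96 map_zip_colT[of "\<lambda>t c. dm3 t 5 (pt0 6) * v $ c"] CL_eq by (simp add: EP_def dm3_def pt0_vals z_0_0 z_0_1 z_0_2 z_0_3 z_0_4 z_0_5 z_1_0 z_1_1 z_1_2 z_1_3 z_1_4 z_1_5 z_2_0 z_2_1 z_2_2 z_2_3 z_2_4 z_2_5 z_3_0 z_3_1 z_3_2 z_3_3 z_3_4 z_3_5 z_4_0 z_4_1 z_4_2 z_4_3 z_4_4 z_4_5 z_5_0 z_5_1 z_5_2 z_5_3 z_5_4 z_5_5 add.assoc)
  have s_7_0: "v $ (6,2) + (2 * v $ (6,3) + (2 * v $ (7,1))) = 0"
    using e[of 0 7] unfolding sum_UNIV96 map_zip_colT[of "\<lambda>t c. dm3 t 0 (pt0 7) * v $ c"] CL_eq by (simp add: EP_def dm3_def pt0_vals z_0_0 z_0_1 z_0_2 z_0_3 z_0_4 z_0_5 z_1_0 z_1_1 z_1_2 z_1_3 z_1_4 z_1_5 z_2_0 z_2_1 z_2_2 z_2_3 z_2_4 z_2_5 z_3_0 z_3_1 z_3_2 z_3_3 z_3_4 z_3_5 z_4_0 z_4_1 z_4_2 z_4_3 z_4_4 z_4_5 z_5_0 z_5_1 z_5_2 z_5_3 z_5_4 z_5_5 add.assoc)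
  have s_7_1: "v $ (6,2) + (2 * v $ (6,3) + (2 * v $ (8,1))) = 0"
    using e[of 1 7] unfolding sum_UNIV96 map_zip_colT[of "\<lambda>t c. dm3 t 1 (pt0 7) * v $ c"] CL_eq by (simp add: EP_def dm3_def pt0_vals z_0_0 z_0_1 z_0_2 z_0_3 z_0_4 z_0_5 z_1_0 z_1_1 z_1_2 z_1_3 z_1_4 z_1_5 z_2_0 z_2_1 z_2_2 z_2_3 z_2_4 z_2_5 z_3_0 z_3_1 z_3_2 z_3_3 z_3_4 z_3_5 z_4_0 z_4_1 z_4_2 z_4_3 z_4_4 z_4_5 z_5_0 z_5_1 z_5_2 z_5_3 z_5_4 z_5_5 add.assoc)
  have s_7_2: "v $ (6,0) + (v $ (7,3) + (2 * v $ (7,4) + (2 * v $ (8,4)))) = 0"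
    using e[of 2 7] unfolding sum_UNIV96 map_zip_colT[of "\<lambda>t c. dm3 t 2 (pt0 7) * v $ c"] CL_eq by (simp add: EP_def dm3_def pt0_vals z_0_0 z_0_1 z_0_2 z_0_3 z_0_4 z_0_5 z_1_0 z_1_1 z_1_2 z_1_3 z_1_4 z_1_5 z_2_0 z_2_1 z_2_2 z_2_3 z_2_4 z_2_5 z_3_0 z_3_1 z_3_2 z_3_3 z_3_4 z_3_5 z_4_0 z_4_1 z_4_2 z_4_3 z_4_4 z_4_5 z_5_0 z_5_1 z_5_2 z_5_3 z_5_4 z_5_5 add.assoc)
  have s_7_3: "v $ (6,1) + (v $ (6,5) + (2 * v $ (7,0) + (v $ (7,5) + (2 * v $ (8,0) + (2 * v $ (8,5)))))) = 0"
    using e[of 3 7] unfolding sum_UNIV96 map_zip_colT[of "\<lambda>t c. dm3 t 3 (pt0 7) * v $ c"] CL_eq by (simp add: EP_def dm3_def pt0_vals z_0_0 z_0_1 z_0_2 z_0_3 z_0_4 z_0_5 z_1_0 z_1_1 z_1_2 z_1_3 z_1_4 z_1_5 z_2_0 z_2_1 z_2_2 z_2_3 z_2_4 z_2_5 z_3_0 z_3_1 z_3_2 z_3_3 z_3_4 z_3_5 z_4_0 z_4_1 z_4_2 z_4_3 z_4_4 z_4_5 z_5_0 z_5_1 z_5_2 z_5_3 z_5_4 z_5_5 add.assoc)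
  have s_7_4: "v $ (6,2) + (2 * v $ (7,1) + (2 * v $ (8,1))) = 0"
    using e[of 4 7] unfolding sum_UNIV96 map_zip_colT[of "\<lambda>t c. dm3 t 4 (pt0 7) * v $ c"] CL_eq by (simp add: EP_def dm3_def pt0_vals z_0_0 z_0_1 z_0_2 z_0_3 z_0_4 z_0_5 z_1_0 z_1_1 z_1_2 z_1_3 z_1_4 z_1_5 z_2_0 z_2_1 z_2_2 z_2_3 z_2_4 z_2_5 z_3_0 z_3_1 z_3_2 z_3_3 z_3_4 z_3_5 z_4_0 z_4_1 z_4_2 z_4_3 z_4_4 z_4_5 z_5_0 z_5_1 z_5_2 z_5_3 z_5_4 z_5_5 add.assoc)
  have s_7_5: "v $ (6,3) + (v $ (7,1) + (v $ (8,1))) = 0"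
    using e[of 5 7] unfolding sum_UNIV96 map_zip_colT[of "\<lambda>t c. dm3 t 5 (pt0 7) * v $ c"] CL_eq by (simp add: EP_def dm3_def pt0_vals z_0_0 z_0_1 z_0_2 z_0_3 z_0_4 z_0_5 z_1_0 z_1_1 z_1_2 z_1_3 z_1_4 z_1_5 z_2_0 z_2_1 z_2_2 z_2_3 z_2_4 z_2_5 z_3_0 z_3_1 z_3_2 z_3_3 z_3_4 z_3_5 z_4_0 z_4_1 z_4_2 z_4_3 z_4_4 z_4_5 z_5_0 z_5_1 z_5_2 z_5_3 z_5_4 z_5_5 add.assoc)
  have s_8_0: "2 * v $ (6,0) + (2 * v $ (6,1) + (v $ (6,4))) = 0"
    using e[of 0 8] unfolding sum_UNIV96 map_zip_colT[of "\<lambda>t c. dm3 t 0 (pt0 8) * v $ c"] CL_eq by (simp add: EP_def dm3_def pt0_vals z_0_0 z_0_1 z_0_2 z_0_3 z_0_4 z_0_5 z_1_0 z_1_1 z_1_2 z_1_3 z_1_4 z_1_5 z_2_0 z_2_1 z_2_2 z_2_3 z_2_4 z_2_5 z_3_0 z_3_1 z_3_2 z_3_3 z_3_4 z_3_5 z_4_0 z_4_1 z_4_2 z_4_3 z_4_4 z_4_5 z_5_0 z_5_1 z_5_2 z_5_3 z_5_4 z_5_5 add.assoc)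
  have s_8_1: "v $ (6,0) + (v $ (6,1) + (v $ (7,2))) = 0"
    using e[of 1 8] unfolding sum_UNIV96 map_zip_colT[of "\<lambda>t c. dm3 t 1 (pt0 8) * v $ c"] CL_eq by (simp add: EP_def dm3_def pt0_vals z_0_0 z_0_1 z_0_2 z_0_3 z_0_4 z_0_5 z_1_0 z_1_1 z_1_2 z_1_3 z_1_4 z_1_5 z_2_0 z_2_1 z_2_2 z_2_3 z_2_4 z_2_5 z_3_0 z_3_1 z_3_2 z_3_3 z_3_4 z_3_5 z_4_0 z_4_1 z_4_2 z_4_3 z_4_4 z_4_5 z_5_0 z_5_1 z_5_2 z_5_3 z_5_4 z_5_5 add.assoc)
  have s_8_2: "2 * v $ (6,0) + (v $ (6,4) + (2 * v $ (7,2))) = 0"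
    using e[of 2 8] unfolding sum_UNIV96 map_zip_colT[of "\<lambda>t c. dm3 t 2 (pt0 8) * v $ c"] CL_eq by (simp add: EP_def dm3_def pt0_vals z_0_0 z_0_1 z_0_2 z_0_3 z_0_4 z_0_5 z_1_0 z_1_1 z_1_2 z_1_3 z_1_4 z_1_5 z_2_0 z_2_1 z_2_2 z_2_3 z_2_4 z_2_5 z_3_0 z_3_1 z_3_2 z_3_3 z_3_4 z_3_5 z_4_0 z_4_1 z_4_2 z_4_3 z_4_4 z_4_5 z_5_0 z_5_1 z_5_2 z_5_3 z_5_4 z_5_5 add.assoc)
  have s_8_3: "2 * v $ (6,1) + (v $ (6,4) + (2 * v $ (7,2))) = 0"
    using e[of 3 8] unfolding sum_UNIV96 map_zip_colT[of "\<lambda>t c. dm3 t 3 (pt0 8) * v $ c"] CL_eq by (simp add: EP_def dm3_def pt0_vals z_0_0 z_0_1 z_0_2 z_0_3 z_0_4 z_0_5 z_1_0 z_1_1 z_1_2 z_1_3 z_1_4 z_1_5 z_2_0 z_2_1 z_2_2 z_2_3 z_2_4 z_2_5 z_3_0 z_3_1 z_3_2 z_3_3 z_3_4 z_3_5 z_4_0 z_4_1 z_4_2 z_4_3 z_4_4 z_4_5 z_5_0 z_5_1 z_5_2 z_5_3 z_5_4 z_5_5 add.assoc)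
  have s_8_4: "2 * v $ (6,2) + (v $ (6,5) + (2 * v $ (7,3) + (2 * v $ (7,5) + (v $ (8,2))))) = 0"
    using e[of 4 8] unfolding sum_UNIV96 map_zip_colT[of "\<lambda>t c. dm3 t 4 (pt0 8) * v $ c"] CL_eq by (simp add: EP_def dm3_def pt0_vals z_0_0 z_0_1 z_0_2 z_0_3 z_0_4 z_0_5 z_1_0 z_1_1 z_1_2 z_1_3 z_1_4 z_1_5 z_2_0 z_2_1 z_2_2 z_2_3 z_2_4 z_2_5 z_3_0 z_3_1 z_3_2 z_3_3 z_3_4 z_3_5 z_4_0 z_4_1 z_4_2 z_4_3 z_4_4 z_4_5 z_5_0 z_5_1 z_5_2 z_5_3 z_5_4 z_5_5 add.assoc)
  have s_8_5: "2 * v $ (6,3) + (v $ (7,0) + (2 * v $ (7,4) + (2 * v $ (8,0) + (v $ (8,3))))) = 0"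
    using e[of 5 8] unfolding sum_UNIV96 map_zip_colT[of "\<lambda>t c. dm3 t 5 (pt0 8) * v $ c"] CL_eq by (simp add: EP_def dm3_def pt0_vals z_0_0 z_0_1 z_0_2 z_0_3 z_0_4 z_0_5 z_1_0 z_1_1 z_1_2 z_1_3 z_1_4 z_1_5 z_2_0 z_2_1 z_2_2 z_2_3 z_2_4 z_2_5 z_3_0 z_3_1 z_3_2 z_3_3 z_3_4 z_3_5 z_4_0 z_4_1 z_4_2 z_4_3 z_4_4 z_4_5 z_5_0 z_5_1 z_5_2 z_5_3 z_5_4 z_5_5 add.assoc)
  have w1: "2 * v $ (8,2) + (2 * v $ (8,3) + (v $ (8,4))) = 0" using s_6_2  by simp
  have w2: "v $ (8,2) + (v $ (8,3) + (v $ (8,5))) = 0" using s_6_3  by simp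
  have w3: "2 * v $ (8,2) + (v $ (8,4) + (2 * v $ (8,5))) = 0" using s_6_4  by simp
  have w4: "2 * v $ (8,3) + (v $ (8,4) + (2 * v $ (8,5))) = 0" using s_6_5  by simp
  have "6 * v $ (8,2) = (1) * (2 * v $ (8,2) + (2 * v $ (8,3) + (v $ (8,4)))) + (2) * (v $ (8,2) + (v $ (8,3) + (v $ (8,5)))) + (1) * (2 * v $ (8,2) + (v $ (8,4) + (2 * v $ (8,5)))) + (-2) * (2 * v $ (8,3) + (v $ (8,4) + (2 * v $ (8,5))))" by algebra
  then have q_8_2: "v $ (8,2) = 0" using w1 w2 w3 w4 by simp
  have "6 * v $ (8,3) = (1) * (2 * v $ (8,2) + (2 * v $ (8,3) + (v $ (8,4)))) + (2) * (v $ (8,2) + (v $ (8,3) + (v $ (8,5)))) + (-2) * (2 * v $ (8,2) + (v $ (8,4) + (2 * v $ (8,5)))) + (1) * (2 * v $ (8,3) + (v $ (8,4) + (2 * v $ (8,5))))" by algebra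
  then have q_8_3: "v $ (8,3) = 0" using w1 w2 w3 w4 by simp
  have "3 * v $ (8,4) = (1) * (2 * v $ (8,2) + (2 * v $ (8,3) + (v $ (8,4)))) + (-4) * (v $ (8,2) + (v $ (8,3) + (v $ (8,5)))) + (1) * (2 * v $ (8,2) + (v $ (8,4) + (2 * v $ (8,5)))) + (1) * (2 * v $ (8,3) + (v $ (8,4) + (2 * v $ (8,5))))" by algebra
  then have q_8_4: "v $ (8,4) = 0" using w1 w2 w3 w4 by simp
  have "6 * v $ (8,5) = (-2) * (2 * v $ (8,2) + (2 * v $ (8,3) + (v $ (8,4)))) + (2) * (v $ (8,2) + (v $ (8,3) + (v $ (8,5)))) + (1) * (2 * v $ (8,2) + (v $ (8,4) + (2 * v $ (8,5)))) + (1) * (2 * v $ (8,3) + (v $ (8,4) + (2 * v $ (8,5))))" by algebra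
  then have q_8_5: "v $ (8,5) = 0" using w1 w2 w3 w4 by simp
  have w5: "v $ (6,2) + (2 * v $ (6,3) + (2 * v $ (7,1))) = 0" using s_7_0 q_8_2 q_8_3 q_8_4 q_8_5 by simp
  have w6: "v $ (6,2) + (2 * v $ (6,3) + (2 * v $ (8,1))) = 0" using s_7_1 q_8_2 q_8_3 q_8_4 q_8_5 by simp
  have w7: "v $ (6,2) + (2 * v $ (7,1) + (2 * v $ (8,1))) = 0" using s_7_4 q_8_2 q_8_3 q_8_4 q_8_5 by simp
  have w8: "v $ (6,3) + (v $ (7,1) + (v $ (8,1))) = 0" using s_7_5 q_8_2 q_8_3 q_8_4 q_8_5 by simp
  have "3 * v $ (6,2) = (1) * (v $ (6,2) + (2 * v $ (6,3) + (2 * v $ (7,1)))) + (1) * (v $ (6,2) + (2 * v $ (6,3) + (2 * v $ (8,1)))) + (1) * (v $ (6,2) + (2 * v $ (7,1) + (2 * v $ (8,1)))) + (-4) * (v $ (6,3) + (v $ (7,1) + (v $ (8,1))))" by algebra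
  then have q_6_2: "v $ (6,2) = 0" using w5 w6 w7 w8 by simp
  have "6 * v $ (6,3) = (1) * (v $ (6,2) + (2 * v $ (6,3) + (2 * v $ (7,1)))) + (1) * (v $ (6,2) + (2 * v $ (6,3) + (2 * v $ (8,1)))) + (-2) * (v $ (6,2) + (2 * v $ (7,1) + (2 * v $ (8,1)))) + (2) * (v $ (6,3) + (v $ (7,1) + (v $ (8,1))))" by algebra
  then have q_6_3: "v $ (6,3) = 0" using w5 w6 w7 w8 by simp
  have "6 * v $ (7,1) = (1) * (v $ (6,2) + (2 * v $ (6,3) + (2 * v $ (7,1)))) + (-2) * (v $ (6,2) + (2 * v $ (6,3) + (2 * v $ (8,1)))) + (1) * (v $ (6,2) + (2 * v $ (7,1) + (2 * v $ (8,1)))) + (2) * (v $ (6,3) + (v $ (7,1) + (v $ (8,1))))" by algebra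
  then have q_7_1: "v $ (7,1) = 0" using w5 w6 w7 w8 by simp
  have "6 * v $ (8,1) = (-2) * (v $ (6,2) + (2 * v $ (6,3) + (2 * v $ (7,1)))) + (1) * (v $ (6,2) + (2 * v $ (6,3) + (2 * v $ (8,1)))) + (1) * (v $ (6,2) + (2 * v $ (7,1) + (2 * v $ (8,1)))) + (2) * (v $ (6,3) + (v $ (7,1) + (v $ (8,1))))" by algebra
  then have q_8_1: "v $ (8,1) = 0" using w5 w6 w7 w8 by simp
  have w9: "2 * v $ (6,0) + (2 * v $ (6,1) + (v $ (6,4))) = 0" using s_8_0 q_6_2 q_6_3 q_7_1 q_8_1 q_8_2 q_8_3 q_8_4 q_8_5 by simp
  have w10: "v $ (6,0) + (v $ (6,1) + (v $ (7,2))) = 0" using s_8_1 q_6_2 q_6_3 q_7_1 q_8_1 q_8_2 q_8_3 q_8_4 q_8_5 by simp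
  have w11: "2 * v $ (6,0) + (v $ (6,4) + (2 * v $ (7,2))) = 0" using s_8_2 q_6_2 q_6_3 q_7_1 q_8_1 q_8_2 q_8_3 q_8_4 q_8_5 by simp
  have w12: "2 * v $ (6,1) + (v $ (6,4) + (2 * v $ (7,2))) = 0" using s_8_3 q_6_2 q_6_3 q_7_1 q_8_1 q_8_2 q_8_3 q_8_4 q_8_5 by simp
  have "6 * v $ (6,0) = (1) * (2 * v $ (6,0) + (2 * v $ (6,1) + (v $ (6,4)))) + (2) * (v $ (6,0) + (v $ (6,1) + (v $ (7,2)))) + (1) * (2 * v $ (6,0) + (v $ (6,4) + (2 * v $ (7,2)))) + (-2) * (2 * v $ (6,1) + (v $ (6,4) + (2 * v $ (7,2))))" by algebra
  then have q_6_0: "v $ (6,0) = 0" using w9 w10 w11 w12 by simp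
  have "6 * v $ (6,1) = (1) * (2 * v $ (6,0) + (2 * v $ (6,1) + (v $ (6,4)))) + (2) * (v $ (6,0) + (v $ (6,1) + (v $ (7,2)))) + (-2) * (2 * v $ (6,0) + (v $ (6,4) + (2 * v $ (7,2)))) + (1) * (2 * v $ (6,1) + (v $ (6,4) + (2 * v $ (7,2))))" by algebra
  then have q_6_1: "v $ (6,1) = 0" using w9 w10 w11 w12 by simp
  have "3 * v $ (6,4) = (1) * (2 * v $ (6,0) + (2 * v $ (6,1) + (v $ (6,4)))) + (-4) * (v $ (6,0) + (v $ (6,1) + (v $ (7,2)))) + (1) * (2 * v $ (6,0) + (v $ (6,4) + (2 * v $ (7,2)))) + (1) * (2 * v $ (6,1) + (v $ (6,4) + (2 * v $ (7,2))))" by algebra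
  then have q_6_4: "v $ (6,4) = 0" using w9 w10 w11 w12 by simp
  have "6 * v $ (7,2) = (-2) * (2 * v $ (6,0) + (2 * v $ (6,1) + (v $ (6,4)))) + (2) * (v $ (6,0) + (v $ (6,1) + (v $ (7,2)))) + (1) * (2 * v $ (6,0) + (v $ (6,4) + (2 * v $ (7,2)))) + (1) * (2 * v $ (6,1) + (v $ (6,4) + (2 * v $ (7,2))))" by algebra
  then have q_7_2: "v $ (7,2) = 0" using w9 w10 w11 w12 by simp
  have w13: "2 * v $ (6,5) + (2 * v $ (7,0)) = 0" using s_6_0 q_6_0 q_6_1 q_6_2 q_6_3 q_6_4 q_7_1 q_7_2 q_8_1 q_8_2 q_8_3 q_8_4 q_8_5 by simp
  have w14: "v $ (7,3) + (v $ (7,4) + (2 * v $ (7,5) + (2 * v $ (8,0)))) = 0" using s_6_1 q_6_0 q_6_1 q_6_2 q_6_3 q_6_4 q_7_1 q_7_2 q_8_1 q_8_2 q_8_3 q_8_4 q_8_5 by simp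
  have w15: "v $ (7,3) + (2 * v $ (7,4)) = 0" using s_7_2 q_6_0 q_6_1 q_6_2 q_6_3 q_6_4 q_7_1 q_7_2 q_8_1 q_8_2 q_8_3 q_8_4 q_8_5 by simp
  have w16: "v $ (6,5) + (2 * v $ (7,0) + (v $ (7,5) + (2 * v $ (8,0)))) = 0" using s_7_3 q_6_0 q_6_1 q_6_2 q_6_3 q_6_4 q_7_1 q_7_2 q_8_1 q_8_2 q_8_3 q_8_4 q_8_5 by simp
  have w17: "v $ (6,5) + (2 * v $ (7,3) + (2 * v $ (7,5))) = 0" using s_8_4 q_6_0 q_6_1 q_6_2 q_6_3 q_6_4 q_7_1 q_7_2 q_8_1 q_8_2 q_8_3 q_8_4 q_8_5 by simp
  have w18: "v $ (7,0) + (2 * v $ (7,4) + (2 * v $ (8,0))) = 0" using s_8_5 q_6_0 q_6_1 q_6_2 q_6_3 q_6_4 q_7_1 q_7_2 q_8_1 q_8_2 q_8_3 q_8_4 q_8_5 by simp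
  have "1 * v $ (6,5) = (1) * (2 * v $ (6,5) + (2 * v $ (7,0))) + (-2) * (v $ (7,3) + (2 * v $ (7,4))) + (-2) * (v $ (6,5) + (2 * v $ (7,0) + (v $ (7,5) + (2 * v $ (8,0))))) + (1) * (v $ (6,5) + (2 * v $ (7,3) + (2 * v $ (7,5)))) + (2) * (v $ (7,0) + (2 * v $ (7,4) + (2 * v $ (8,0))))" by algebra
  then have q_6_5: "v $ (6,5) = 0" using w13 w14 w15 w16 w17 w18 by simp
  have "2 * v $ (7,0) = (-1) * (2 * v $ (6,5) + (2 * v $ (7,0))) + (4) * (v $ (7,3) + (2 * v $ (7,4))) + (4) * (v $ (6,5) + (2 * v $ (7,0) + (v $ (7,5) + (2 * v $ (8,0))))) + (-2) * (v $ (6,5) + (2 * v $ (7,3) + (2 * v $ (7,5)))) + (-4) * (v $ (7,0) + (2 * v $ (7,4) + (2 * v $ (8,0))))" by algebra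
  then have q_7_0: "v $ (7,0) = 0" using w13 w14 w15 w16 w17 w18 by simp
  have "1 * v $ (7,3) = (-1) * (2 * v $ (6,5) + (2 * v $ (7,0))) + (-2) * (v $ (7,3) + (v $ (7,4) + (2 * v $ (7,5) + (2 * v $ (8,0))))) + (-1) * (v $ (7,3) + (2 * v $ (7,4))) + (2) * (v $ (6,5) + (2 * v $ (7,3) + (2 * v $ (7,5)))) + (2) * (v $ (7,0) + (2 * v $ (7,4) + (2 * v $ (8,0))))" by algebra
  then have q_7_3: "v $ (7,3) = 0" using w13 w14 w15 w16 w17 w18 by simp
  have "2 * v $ (7,4) = (1) * (2 * v $ (6,5) + (2 * v $ (7,0))) + (2) * (v $ (7,3) + (v $ (7,4) + (2 * v $ (7,5) + (2 * v $ (8,0))))) + (2) * (v $ (7,3) + (2 * v $ (7,4))) + (-2) * (v $ (6,5) + (2 * v $ (7,3) + (2 * v $ (7,5)))) + (-2) * (v $ (7,0) + (2 * v $ (7,4) + (2 * v $ (8,0))))" by algebra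
  then have q_7_4: "v $ (7,4) = 0" using w13 w14 w15 w16 w17 w18 by simp
  have "2 * v $ (7,5) = (1) * (2 * v $ (6,5) + (2 * v $ (7,0))) + (4) * (v $ (7,3) + (v $ (7,4) + (2 * v $ (7,5) + (2 * v $ (8,0))))) + (4) * (v $ (7,3) + (2 * v $ (7,4))) + (2) * (v $ (6,5) + (2 * v $ (7,0) + (v $ (7,5) + (2 * v $ (8,0))))) + (-4) * (v $ (6,5) + (2 * v $ (7,3) + (2 * v $ (7,5)))) + (-6) * (v $ (7,0) + (2 * v $ (7,4) + (2 * v $ (8,0))))" by algebra
  then have q_7_5: "v $ (7,5) = 0" using w13 w14 w15 w16 w17 w18 by simp
  have "4 * v $ (8,0) = (-1) * (2 * v $ (6,5) + (2 * v $ (7,0))) + (-4) * (v $ (7,3) + (v $ (7,4) + (2 * v $ (7,5) + (2 * v $ (8,0))))) + (-8) * (v $ (7,3) + (2 * v $ (7,4))) + (-4) * (v $ (6,5) + (2 * v $ (7,0) + (v $ (7,5) + (2 * v $ (8,0))))) + (6) * (v $ (6,5) + (2 * v $ (7,3) + (2 * v $ (7,5)))) + (10) * (v $ (7,0) + (2 * v $ (7,4) + (2 * v $ (8,0))))" by algebra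
  then have q_8_0: "v $ (8,0) = 0" using w13 w14 w15 w16 w17 w18 by simp
  have "v $ c = 0" for c
  proof -
    obtain k i where c: "c = (k,i)" by (cases c) auto
    note zz = z_0_0 z_0_1 z_0_2 z_0_3 z_0_4 z_0_5 z_1_0 z_1_1 z_1_2 z_1_3 z_1_4 z_1_5 z_2_0 z_2_1 z_2_2 z_2_3 z_2_4 z_2_5 z_3_0 z_3_1 z_3_2 z_3_3 z_3_4 z_3_5 z_4_0 z_4_1 z_4_2 z_4_3 z_4_4 z_4_5 z_5_0 z_5_1 z_5_2 z_5_3 z_5_4 z_5_5 q_6_0 q_6_1 q_6_2 q_6_3 q_6_4 q_6_5 q_7_0 q_7_1 q_7_2 q_7_3 q_7_4 q_7_5 q_8_0 q_8_1 q_8_2 q_8_3 q_8_4 q_8_5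
    show ?thesis unfolding c using exhaust_9[of k] exhaust_6[of i]
      by (elim disjE) (simp_all only: zz)
  qed
  then show ?thesis by (simp add: vec_eq_iff)
qed

definition mon :: "('i::finite \<Rightarrow> nat) \<Rightarrow> ('i \<Rightarrow> complex) \<Rightarrow> complex" where
  "mon \<alpha> z = (\<Prod>i\<in>UNIV. z i ^ \<alpha> i)"

lemma polyfun_alt: "polyfun G \<longleftrightarrow> (\<exists>A c. finite A \<and> G = (\<lambda>z. \<Sum>\<alpha>\<in>A. c \<alpha> * mon \<alpha> z))"
  by (simp add: polyfun_def mon_def)

lemma mon_add: "mon (\<lambda>i. \<alpha> i + \<beta> i) z = mon \<alpha> z * mon \<beta> z"
  by (simp add: mon_def power_add prod.distrib)

lemma polyfun_const: "polyfun (\<lambda>z::'i::finite \<Rightarrow> complex. k)"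
  unfolding polyfun_alt
  by (rule exI[of _ "{\<lambda>_. 0}"], rule exI[of _ "\<lambda>_. k"]) (simp add: mon_def)

lemma polyfun_var: "polyfun (\<lambda>z::'i::finite \<Rightarrow> complex. z j)"
proof -
  have "mon (\<lambda>i. if i = j then 1 else 0) z = z j" for z :: "'i \<Rightarrow> complex"
  proof -
    have "mon (\<lambda>i. if i = j then 1 else 0) z = (\<Prod>i\<in>UNIV. if i = j then z i else 1)"
      unfolding mon_def by (rule prod.cong) auto
    then show ?thesis by simp
  qed
  then show ?thesis unfolding polyfun_alt
    by (intro exI[of _ "{\<lambda>i. if i = j then 1 else 0}"] exI[of _ "\<lambda>_. 1"]) auto
qed

lemma polyfun_add:
  assumes "polyfun f" "polyfun (g :: ('i::finite \<Rightarrow> complex) \<Rightarrow> complex)"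
  shows "polyfun (\<lambda>z. f z + g z)"
proof -
  obtain A c where A: "finite A" "f = (\<lambda>z. \<Sum>\<alpha>\<in>A. c \<alpha> * mon \<alpha> z)" using assms(1) unfolding polyfun_alt by blast
  obtain B d where B: "finite B" "g = (\<lambda>z. \<Sum>\<alpha>\<in>B. d \<alpha> * mon \<alpha> z)" using assms(2) unfolding polyfun_alt by blast
  define e where "e \<alpha> = (if \<alpha> \<in> A then c \<alpha> else 0) + (if \<alpha> \<in> B then d \<alpha> else 0)" for \<alpha>
  have "(\<Sum>\<alpha>\<in>A \<union> B. e \<alpha> * mon \<alpha> z) = f z + g z" for z
  proof -
    have "(\<Sum>\<alpha>\<in>A \<union> B. e \<alpha> * mon \<alpha> z) = (\<Sum>\<alpha>\<in>A \<union> B. if \<alpha> \<in> A then c \<alpha> * mon \<alpha> z else 0)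
        + (\<Sum>\<alpha>\<in>A \<union> B. if \<alpha> \<in> B then d \<alpha> * mon \<alpha> z else 0)"
      unfolding e_def sum.distrib[symmetric] by (rule sum.cong) (auto simp: distrib_right)
    also have "\<dots> = (\<Sum>\<alpha>\<in>(A \<union> B) \<inter> A. c \<alpha> * mon \<alpha> z) + (\<Sum>\<alpha>\<in>(A \<union> B) \<inter> B. d \<alpha> * mon \<alpha> z)"
      using A(1) B(1) by (simp add: sum.inter_restrict[symmetric])
    also have "(A \<union> B) \<inter> A = A" "(A \<union> B) \<inter> B = B" by blast+
    then have "(\<Sum>\<alpha>\<in>(A \<union> B) \<inter> A. c \<alpha> * mon \<alpha> z) + (\<Sum>\<alpha>\<in>(A \<union> B) \<inter> B. d \<alpha> * mon \<alpha> z) = f z + g z"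
      unfolding A(2) B(2) by simp
    finally show ?thesis .
  qed
  then show ?thesis unfolding polyfun_alt using A(1) B(1)
    by (intro exI[of _ "A \<union> B"] exI[of _ e]) auto
qed

lemma polyfun_mult:
  assumes "polyfun f" "polyfun (g :: ('i::finite \<Rightarrow> complex) \<Rightarrow> complex)"
  shows "polyfun (\<lambda>z. f z * g z)"
proof -
  obtain A c where A: "finite A" "f = (\<lambda>z. \<Sum>\<alpha>\<in>A. c \<alpha> * mon \<alpha> z)" using assms(1) unfolding polyfun_alt by blast
  obtain B d where B: "finite B" "g = (\<lambda>z. \<Sum>\<alpha>\<in>B. d \<alpha> * mon \<alpha> z)" using assms(2) unfolding polyfun_alt by blast
  define h where "h p = (\<lambda>i. fst p i + snd p i)" for p :: "('i \<Rightarrow> nat) \<times> ('i \<Rightarrow> nat)"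
  define e where "e \<gamma> = (\<Sum>p\<in>{p. p \<in> A \<times> B \<and> h p = \<gamma>}. c (fst p) * d (snd p))" for \<gamma>
  have fin: "finite (A \<times> B)" using A(1) B(1) by simp
  have "(\<Sum>\<gamma>\<in>h ` (A \<times> B). e \<gamma> * mon \<gamma> z) = f z * g z" for z
  proof -
    have "f z * g z = (\<Sum>\<alpha>\<in>A. \<Sum>\<beta>\<in>B. c \<alpha> * mon \<alpha> z * (d \<beta> * mon \<beta> z))"
      unfolding A(2) B(2) by (rule sum_product)
    also have "\<dots> = (\<Sum>p\<in>A \<times> B. c (fst p) * d (snd p) * mon (h p) z)"
      unfolding sum.cartesian_product h_def by (intro sum.cong refl) (auto simp: mon_add mult_ac)
    also have "\<dots> = (\<Sum>\<gamma>\<in>h ` (A \<times> B). \<Sum>p\<in>{p. p \<in> A \<times> B \<and> h p = \<gamma>}. c (fst p) * d (snd p) * mon (h p) z)"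
      by (rule sum.group[symmetric]) (use fin in auto)
    also have "\<dots> = (\<Sum>\<gamma>\<in>h ` (A \<times> B). e \<gamma> * mon \<gamma> z)"
      unfolding e_def sum_distrib_right by (intro sum.cong refl) auto
    finally show ?thesis by simp
  qed
  then show ?thesis unfolding polyfun_alt using fin
    by (intro exI[of _ "h ` (A \<times> B)"] exI[of _ e]) auto
qed

lemma polyfun_sum:
  assumes "finite S" "\<And>s. s \<in> S \<Longrightarrow> polyfun (f s :: ('i::finite \<Rightarrow> complex) \<Rightarrow> complex)"
  shows "polyfun (\<lambda>z. \<Sum>s\<in>S. f s z)"
  using assms
proof (induction S rule: finite_induct)
  case empty then show ?case using polyfun_const[of 0] by simp
next
  case (insert x F) then show ?case by (simp add: polyfun_add)
qed

lemma polyfun_prod: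
  assumes "finite S" "\<And>s. s \<in> S \<Longrightarrow> polyfun (f s :: ('i::finite \<Rightarrow> complex) \<Rightarrow> complex)"
  shows "polyfun (\<lambda>z. \<Prod>s\<in>S. f s z)"
  using assms
proof (induction S rule: finite_induct)
  case empty then show ?case using polyfun_const[of 1] by simp
next
  case (insert x F) then show ?case by (simp add: polyfun_mult)
qed

lemma polyfun_if: "polyfun f \<Longrightarrow> polyfun g \<Longrightarrow> polyfun (\<lambda>z. if b then f z else g z)"
  by (cases b) auto

definition Gp :: "(9 \<times> 6 \<Rightarrow> complex) \<Rightarrow> complex" where
  "Gp P = det (Mx (\<lambda>k. \<chi> j. P (k,j)))"

lemma polyfun_entry: "polyfun (\<lambda>P :: 9 \<times> 6 \<Rightarrow> complex. dm3 t i (\<chi> j. P (k,j)))"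
proof -
  obtain a b c where t: "t = (a,b,c)" by (cases t) auto
  have eq: "(\<lambda>P :: 9 \<times> 6 \<Rightarrow> complex. dm3 t i (\<chi> j. P (k,j))) =
    (\<lambda>P. (if a = i then P (k,b) * P (k,c) else 0) + (if b = i then P (k,a) * P (k,c) else 0)
       + (if c = i then P (k,a) * P (k,b) else 0))"
    unfolding t by (rule ext) (simp add: dm3_def)
  show ?thesis unfolding eq
    by (intro polyfun_add polyfun_if polyfun_mult polyfun_var polyfun_const)
qed

lemma polyfun_Gp: "polyfun Gp"
proof -
  have eq: "Gp = (\<lambda>P. \<Sum>p\<in>{p. p permutes (UNIV :: (9\<times>6) set)}. of_int (sign p) *
      (\<Prod>r\<in>UNIV. dm3 (colT (p r)) (snd r) (\<chi> j. P (fst r, j))))"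
    unfolding Gp_def det_def Mx_def by simp
  show ?thesis unfolding eq
    by (intro polyfun_sum polyfun_mult polyfun_const polyfun_prod polyfun_entry finite)
qed

lemma Gp_nonzero: "Gp \<noteq> (\<lambda>_. 0)"
proof -
  have "\<forall>x. Mx pt0 *v x = 0 \<longrightarrow> x = 0" using witness_inj by blast
  then have "invertible (Mx pt0)"
    using matrix_left_invertible_ker invertible_left_inverse by blast
  then have "det (Mx pt0) \<noteq> 0" using invertible_det_nz by blast
  moreover have "(\<lambda>k. \<chi> j. (\<lambda>(k, j). pt0 k $ j) (k, j)) = pt0" by simp
  ultimately have "Gp (\<lambda>(k, j). pt0 k $ j) \<noteq> 0" unfolding Gp_def by simp
  then show ?thesis by (metis)
qed

theorem theorem2p3:
  "\<exists>G :: (9 \<times> 6 \<Rightarrow> complex) \<Rightarrow> complex. polyfun G \<and> G \<noteq> (\<lambda>_. 0) \<and>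
     (\<forall>(p :: 9 \<Rightarrow> complex^6) C F.
        G (\<lambda>(k, j). p k $ j) \<noteq> 0 \<longrightarrow>
        ell_normal_sextic C \<longrightarrow> (\<forall>k. p k \<in> C) \<longrightarrow>
        hom_poly 3 F \<longrightarrow> F \<noteq> (\<lambda>_. 0) \<longrightarrow> (\<forall>k. singular_at F (p k)) \<longrightarrow>
        (\<forall>x\<in>secant_variety C. F x = 0) \<and> (\<forall>x\<in>C. singular_at F x))"
proof (intro exI[of _ Gp] conjI polyfun_Gp Gp_nonzero allI impI)
  fix p :: "9 \<Rightarrow> complex^6" and C F
  assume G: "Gp (\<lambda>(k, j). p k $ j) \<noteq> 0" and ens: "ell_normal_sextic C" and pC: "\<forall>k. p k \<in> C"
    and hF: "hom_poly 3 F" and sing: "\<forall>k. singular_at F (p k)"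
  have "(\<lambda>k. \<chi> j. (\<lambda>(k, j). p k $ j) (k, j)) = p" by simp
  then have det: "det (Mx p) \<noteq> 0" using G unfolding Gp_def by simp
  obtain a b A where inv: "invertible (A :: complex^6^6)"
    and C: "C = cone ((\<lambda>v. A *v v) ` weierstrass_sextic a b)"
    using ens unfolding ell_normal_sextic_def by blast
  obtain B where BA: "B ** A = mat 1" using inv invertible_left_inverse by blast
  define F1 where "F1 = (\<lambda>x. Qc 1 0 a b (B *v x))"
  define F2 where "F2 = (\<lambda>x. Qc 0 1 a b (B *v x))"
  obtain d where d: "F = (\<lambda>x. \<Sum>t\<in>TT. d t * m3 t x)" using hom_trirep[OF hF] unfolding trirep_def by blast
  obtain q1 where q1: "F1 = (\<lambda>x. \<Sum>t\<in>TT. q1 t * m3 t x)" using trirep_QcB unfolding trirep_def F1_def by blast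
  obtain q2 where q2: "F2 = (\<lambda>x. \<Sum>t\<in>TT. q2 t * m3 t x)" using trirep_QcB unfolding trirep_def F2_def by blast
  have rF: "\<forall>k i. partial F i (p k) = 0" using sing unfolding singular_at_def by blast
  have rF1: "\<forall>k i. partial F1 i (p k) = 0" using pC sing_C(2)[OF BA] unfolding F1_def C by blast
  have rF2: "\<forall>k i. partial F2 i (p k) = 0" using pC sing_C(2)[OF BA] unfolding F2_def C by blast
  have indep': "\<forall>l1 l2. (\<forall>x. l1 * F1 x + l2 * F2 x = 0) \<longrightarrow> l1 = 0 \<and> l2 = 0"
  proof (intro allI impI)
    fix l1 l2 assume "\<forall>x. l1 * F1 x + l2 * F2 x = 0"
    then have "\<forall>x. Qc l1 l2 a b (B *v x) = 0" unfolding F1_def F2_def using Qc_lin by metis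
    then show "l1 = 0 \<and> l2 = 0" using indep[OF BA] by blast
  qed
  obtain l1 l2 where l: "\<forall>x. F x = l1 * F1 x + l2 * F2 x"
    using combine[OF det d q1 q2 rF rF1 rF2 indep'] by blast
  have Feq: "F = (\<lambda>x. Qc l1 l2 a b (B *v x))"
    using l unfolding F1_def F2_def by (metis Qc_lin)
  show "\<forall>x\<in>secant_variety C. F x = 0"
  proof
    fix x assume x: "x \<in> secant_variety C"
    have "\<forall>y\<in>{s *s u + t *s v | s t u v. u \<in> C \<and> v \<in> C \<and> (\<forall>r. v \<noteq> r *s u) \<and>
        s *s u + t *s v \<noteq> 0}. F y = 0"
      unfolding Feq C using secant_C[OF BA] by blast
    then show "F x = 0" using x hF unfolding secant_variety_def zariski_closure_def by blast
  qed
  show "\<forall>x\<in>C. singular_at F x"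
    unfolding singular_at_def Feq C using sing_C[OF BA] by blast
qed

end
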